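(* Let $Q=[u_1,\dots,u_n]$ be a spherical polygon with exactly one self-intersection, occurring at a point $w$ where the edges $u_iu_{i+1}$ and $u_ju_{j+1}$ cross, and suppose no other vertex of $Q$ lies in the spherical triangle with vertices $u_i,u_j,w$ nor in the spherical triangle with vertices $u_{i+1},u_{j+1},w$. Let $Q'=[u_i,u_j,u_{j-1},\dots,u_{i+2},u_{i+1},u_{j+1},u_{j+2},\dots,u_{i-1}]$. If $D^+,I$ (resp. $D'^+,I'$) denote the numbers of self-intersections and inflections of $Q$ (resp. $Q'$), then $2D^++I\ge 2D'^++I'$.
   Context: A spherical polygon has edges the minimal great-circle arcs between consecutive vertices (indices cyclic). Standing assumption: no three vertices lie on a common great circle. A self-intersection is a pair of non-adjacent edges that intersect. With $[a,b,c]$ the determinant, $\{u_k,u_{k+1}\}$ is an inflection if $[u_{k-1},u_k,u_{k+1}]$ and $[u_k,u_{k+1},u_{k+2}]$ have opposite signs. *)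

theory Defs
  imports "HOL-Analysis.Analysis"
begin

(* Spherical polygons with n vertices u 0, ..., u (n-1) (0-based, indices cyclic mod n) on the
   unit sphere in R^3. *)

definition det3 :: "real^3 \<Rightarrow> real^3 \<Rightarrow> real^3 \<Rightarrow> real" where
  "det3 a b c = det ((\<chi> r. if r = 1 then a else if r = 2 then b else c) :: real^3^3)"

definition vtx :: "nat \<Rightarrow> (nat \<Rightarrow> real^3) \<Rightarrow> nat \<Rightarrow> real^3" where
  "vtx n u k = u (k mod n)"

(* spherical polygon + standing assumption: no three vertices on a common great circle *)
definition sph_polygon :: "nat \<Rightarrow> (nat \<Rightarrow> real^3) \<Rightarrow> bool" where
  "sph_polygon n u \<longleftrightarrow> 3 \<le> n \<and> (\<forall>k<n. norm (u k) = 1) \<and>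
     (\<forall>a<n. \<forall>b<n. \<forall>c<n. a \<noteq> b \<and> b \<noteq> c \<and> a \<noteq> c \<longrightarrow> det3 (u a) (u b) (u c) \<noteq> 0)"

(* minimal great-circle arc between two non-antipodal unit vectors *)
definition sph_arc :: "real^3 \<Rightarrow> real^3 \<Rightarrow> (real^3) set" where
  "sph_arc a b = {x. \<exists>t\<in>{0..1}. x = (1 / norm ((1 - t) *\<^sub>R a + t *\<^sub>R b)) *\<^sub>R ((1 - t) *\<^sub>R a + t *\<^sub>R b)}"

definition edge :: "nat \<Rightarrow> (nat \<Rightarrow> real^3) \<Rightarrow> nat \<Rightarrow> (real^3) set" where
  "edge n u k = sph_arc (vtx n u k) (vtx n u (Suc k))"

definition adjacent_edges :: "nat \<Rightarrow> nat \<Rightarrow> nat \<Rightarrow> bool" where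
  "adjacent_edges n k l \<longleftrightarrow> k = l \<or> Suc k mod n = l \<or> Suc l mod n = k"

definition self_intersections :: "nat \<Rightarrow> (nat \<Rightarrow> real^3) \<Rightarrow> (nat \<times> nat) set" where
  "self_intersections n u = {(k, l). k < l \<and> l < n \<and> \<not> adjacent_edges n k l \<and>
      edge n u k \<inter> edge n u l \<noteq> {}}"

definition num_self_intersections :: "nat \<Rightarrow> (nat \<Rightarrow> real^3) \<Rightarrow> nat" where
  "num_self_intersections n u = card (self_intersections n u)"

definition is_inflection :: "nat \<Rightarrow> (nat \<Rightarrow> real^3) \<Rightarrow> nat \<Rightarrow> bool" where
  "is_inflection n u k \<longleftrightarrow>
     det3 (vtx n u (k + n - 1)) (vtx n u k) (vtx n u (k + 1)) *
     det3 (vtx n u k) (vtx n u (k + 1)) (vtx n u (k + 2)) < 0"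

definition num_inflections :: "nat \<Rightarrow> (nat \<Rightarrow> real^3) \<Rightarrow> nat" where
  "num_inflections n u = card {k. k < n \<and> is_inflection n u k}"

definition sph_triangle :: "real^3 \<Rightarrow> real^3 \<Rightarrow> real^3 \<Rightarrow> (real^3) set" where
  "sph_triangle a b c = {x. norm x = 1 \<and>
     (\<exists>\<alpha> \<beta> \<gamma>. \<alpha> \<ge> 0 \<and> \<beta> \<ge> 0 \<and> \<gamma> \<ge> 0 \<and> x = \<alpha> *\<^sub>R a + \<beta> *\<^sub>R b + \<gamma> *\<^sub>R c)}"

(* Q' = [u_i, u_j, u_(j-1), ..., u_(i+1), u_(j+1), u_(j+2), ..., u_(i-1)] (indices mod n) *)
definition two_opt :: "nat \<Rightarrow> (nat \<Rightarrow> real^3) \<Rightarrow> nat \<Rightarrow> nat \<Rightarrow> nat \<Rightarrow> real^3" where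
  "two_opt n u i j k =
     (let m = (j + n - i) mod n in
      if k = 0 then u i
      else if k \<le> m then u ((j + n + 1 - k) mod n)
      else u ((j + k - m) mod n))"

end

theory Submission
  imports Defs
begin


lemma det3_expand: "det3 a b c = a$1*(b$2*c$3 - b$3*c$2) - a$2*(b$1*c$3 - b$3*c$1) + a$3*(b$1*c$2 - b$2*c$1)"
  unfolding det3_def by (simp add: det_3 algebra_simps)

lemma det3_add1: "det3 (a + a') b c = det3 a b c + det3 a' b c" by (simp add: det3_expand algebra_simps)
lemma det3_add2: "det3 a (b + b') c = det3 a b c + det3 a b' c" by (simp add: det3_expand algebra_simps)
lemma det3_add3: "det3 a b (c + c') = det3 a b c + det3 a b c'" by (simp add: det3_expand algebra_simps)
lemma det3_diff1: "det3 (a - a') b c = det3 a b c - det3 a' b c" by (simp add: det3_expand algebra_simps)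
lemma det3_diff2: "det3 a (b - b') c = det3 a b c - det3 a b' c" by (simp add: det3_expand algebra_simps)
lemma det3_diff3: "det3 a b (c - c') = det3 a b c - det3 a b c'" by (simp add: det3_expand algebra_simps)
lemma det3_scale1: "det3 (x *\<^sub>R a) b c = x * det3 a b c" by (simp add: det3_expand algebra_simps)
lemma det3_scale2: "det3 a (x *\<^sub>R b) c = x * det3 a b c" by (simp add: det3_expand algebra_simps)
lemma det3_scale3: "det3 a b (x *\<^sub>R c) = x * det3 a b c" by (simp add: det3_expand algebra_simps)
lemma det3_zero1: "det3 0 b c = 0" by (simp add: det3_expand)
lemma det3_zero2: "det3 a 0 c = 0" by (simp add: det3_expand)
lemma det3_zero3: "det3 a b 0 = 0" by (simp add: det3_expand)
lemma det3_same12: "det3 a a c = 0" by (simp add: det3_expand algebra_simps)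
lemma det3_same13: "det3 a b a = 0" by (simp add: det3_expand algebra_simps)
lemma det3_same23: "det3 a b b = 0" by (simp add: det3_expand algebra_simps)

lemmas det3_lin = det3_add1 det3_add2 det3_add3 det3_diff1 det3_diff2 det3_diff3
  det3_scale1 det3_scale2 det3_scale3 det3_zero1 det3_zero2 det3_zero3 det3_same12 det3_same13 det3_same23

lemma det3_swap12: "det3 b a c = - det3 a b c" by (simp add: det3_expand algebra_simps)
lemma det3_swap13: "det3 c b a = - det3 a b c" by (simp add: det3_expand algebra_simps)
lemma det3_swap23: "det3 a c b = - det3 a b c" by (simp add: det3_expand algebra_simps)
lemma det3_cyc: "det3 b c a = det3 a b c" by (simp add: det3_expand algebra_simps)
lemma det3_cyc2: "det3 c a b = det3 a b c" by (simp add: det3_expand algebra_simps)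

lemma cramer_comp: "((a1::real)*(b2*c3 - b3*c2) - a2*(b1*c3 - b3*c1) + a3*(b1*c2 - b2*c1)) * x1 =
  (x1*(b2*c3 - b3*c2) - x2*(b1*c3 - b3*c1) + x3*(b1*c2 - b2*c1)) * a1
 + (a1*(x2*c3 - x3*c2) - a2*(x1*c3 - x3*c1) + a3*(x1*c2 - x2*c1)) * b1
 + (a1*(b2*x3 - b3*x2) - a2*(b1*x3 - b3*x1) + a3*(b1*x2 - b2*x1)) * c1"
  by (simp add: algebra_simps)

lemma cramer_scaled:
  "det3 A B C *\<^sub>R x = det3 x B C *\<^sub>R A + det3 A x C *\<^sub>R B + det3 A B x *\<^sub>R C"
proof -
  have "(det3 A B C *\<^sub>R x) $ k = (det3 x B C *\<^sub>R A + det3 A x C *\<^sub>R B + det3 A B x *\<^sub>R C) $ k" for k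
  proof -
    have "k = 1 \<or> k = 2 \<or> k = 3" using exhaust_3 by blast
    then show ?thesis
      unfolding det3_expand vector_add_component vector_scaleR_component
      by (elim disjE; simp add: algebra_simps)
  qed
  then show ?thesis by (simp add: vec_eq_iff)
qed

lemma cramer:
  assumes "det3 A B C \<noteq> 0"
  shows "x = (det3 x B C / det3 A B C) *\<^sub>R A + (det3 A x C / det3 A B C) *\<^sub>R B + (det3 A B x / det3 A B C) *\<^sub>R C"
proof -
  have "x = (1 / det3 A B C) *\<^sub>R (det3 A B C *\<^sub>R x)" using assms by simp
  also have "\<dots> = (det3 x B C / det3 A B C) *\<^sub>R A + (det3 A x C / det3 A B C) *\<^sub>R B + (det3 A B x / det3 A B C) *\<^sub>R C"
    using assms by (simp only: cramer_scaled[of A B C x]) (simp add: scaleR_add_right)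
  finally show ?thesis .
qed

lemma indep3:
  assumes "det3 A B C \<noteq> 0" "a *\<^sub>R A + b *\<^sub>R B + c *\<^sub>R C = 0"
  shows "a = 0 \<and> b = 0 \<and> c = 0"
proof -
  have "det3 (a *\<^sub>R A + b *\<^sub>R B + c *\<^sub>R C) B C = 0" "det3 A (a *\<^sub>R A + b *\<^sub>R B + c *\<^sub>R C) C = 0"
       "det3 A B (a *\<^sub>R A + b *\<^sub>R B + c *\<^sub>R C) = 0" using assms(2) by (simp_all add: det3_lin)
  then have "a * det3 A B C = 0" "b * det3 A B C = 0" "c * det3 A B C = 0"
    by (simp_all add: det3_lin)
  then show ?thesis using assms(1) by simp
qed


definition cone2 :: "real^3 \<Rightarrow> real^3 \<Rightarrow> real^3 \<Rightarrow> bool" where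
  "cone2 a b y \<longleftrightarrow> (\<exists>\<mu> \<nu>. \<mu> \<ge> 0 \<and> \<nu> \<ge> 0 \<and> y = \<mu> *\<^sub>R a + \<nu> *\<^sub>R b)"

lemma cone2_sym: "cone2 a b y \<longleftrightarrow> cone2 b a y"
  unfolding cone2_def by (metis add.commute)

lemma arc_cone:
  assumes "det3 a b c \<noteq> 0" "x \<in> sph_arc a b"
  shows "cone2 a b x \<and> x \<noteq> 0"
proof -
  obtain t where t: "t \<in> {0..1}" and x: "x = (1 / norm ((1 - t) *\<^sub>R a + t *\<^sub>R b)) *\<^sub>R ((1 - t) *\<^sub>R a + t *\<^sub>R b)"
    using assms(2) unfolding sph_arc_def by blast
  define v where "v = (1 - t) *\<^sub>R a + t *\<^sub>R b"
  have "v \<noteq> 0"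
  proof
    assume "v = 0"
    then have "det3 v b c = 0" "det3 a v c = 0" by (simp_all add: det3_lin)
    then have "(1 - t) * det3 a b c = 0" "t * det3 a b c = 0" unfolding v_def by (simp_all add: det3_lin)
    then show False using assms(1) by simp
  qed
  then have N: "norm v > 0" by simp
  have "x = ((1 - t) / norm v) *\<^sub>R a + (t / norm v) *\<^sub>R b"
    using x unfolding v_def[symmetric] by (simp add: v_def scaleR_add_right divide_inverse mult.commute)
  moreover have "(1 - t) / norm v \<ge> 0" "t / norm v \<ge> 0" using t N by auto
  ultimately have "cone2 a b x" unfolding cone2_def by blast
  moreover have "x \<noteq> 0" using x \<open>v \<noteq> 0\<close> N unfolding v_def[symmetric] by simp
  ultimately show ?thesis by blast
qed

lemma cone_arc:
  assumes "cone2 a b y" "y \<noteq> 0"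
  shows "(1 / norm y) *\<^sub>R y \<in> sph_arc a b"
proof -
  obtain \<mu> \<nu> where m: "\<mu> \<ge> 0" "\<nu> \<ge> 0" "y = \<mu> *\<^sub>R a + \<nu> *\<^sub>R b" using assms(1) unfolding cone2_def by blast
  have s: "\<mu> + \<nu> > 0"
  proof (rule ccontr)
    assume "\<not> \<mu> + \<nu> > 0" then have "\<mu> = 0" "\<nu> = 0" using m by auto
    then show False using m assms(2) by simp
  qed
  define t where "t = \<nu> / (\<mu> + \<nu>)"
  have t01: "t \<in> {0..1}" using s m unfolding t_def by auto
  have "1 - t = \<mu> / (\<mu> + \<nu>)" using s unfolding t_def by (simp add: field_simps)
  then have v: "(1 - t) *\<^sub>R a + t *\<^sub>R b = (1 / (\<mu> + \<nu>)) *\<^sub>R y"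
    unfolding t_def m(3) by (simp add: scaleR_add_right divide_inverse mult.commute)
  have "(1 / norm ((1 - t) *\<^sub>R a + t *\<^sub>R b)) *\<^sub>R ((1 - t) *\<^sub>R a + t *\<^sub>R b) = (1 / norm y) *\<^sub>R y"
    unfolding v using s assms(2) by (simp add: field_simps)
  then show ?thesis unfolding sph_arc_def using t01 by (metis (mono_tags, lifting) mem_Collect_eq)
qed

lemma arc_sym: "sph_arc a b = sph_arc b a"
proof -
  have *: "sph_arc a b \<subseteq> sph_arc b a" for a b
  proof
    fix x assume "x \<in> sph_arc a b"
    then obtain t where t: "t \<in> {0..1}" and x: "x = (1 / norm ((1 - t) *\<^sub>R a + t *\<^sub>R b)) *\<^sub>R ((1 - t) *\<^sub>R a + t *\<^sub>R b)"
      unfolding sph_arc_def by blast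
    have e: "(1 - t) *\<^sub>R a + t *\<^sub>R b = (1 - (1 - t)) *\<^sub>R b + (1 - t) *\<^sub>R a" by simp
    have "1 - t \<in> {0..1}" using t by auto
    moreover have "x = (1 / norm ((1 - (1 - t)) *\<^sub>R b + (1 - t) *\<^sub>R a)) *\<^sub>R ((1 - (1 - t)) *\<^sub>R b + (1 - t) *\<^sub>R a)"
      using x e by metis
    ultimately show "x \<in> sph_arc b a" unfolding sph_arc_def mem_Collect_eq by (rule bexI[rotated])
  qed
  show ?thesis using *[of a b] *[of b a] by blast
qed

lemma meet_iff:
  assumes "det3 a b c \<noteq> 0" "det3 a' b' c' \<noteq> 0"
  shows "sph_arc a b \<inter> sph_arc a' b' \<noteq> {} \<longleftrightarrow> (\<exists>y. y \<noteq> 0 \<and> cone2 a b y \<and> cone2 a' b' y)"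
proof
  assume "sph_arc a b \<inter> sph_arc a' b' \<noteq> {}"
  then obtain x where "x \<in> sph_arc a b" "x \<in> sph_arc a' b'" by blast
  then show "\<exists>y. y \<noteq> 0 \<and> cone2 a b y \<and> cone2 a' b' y" using arc_cone assms by blast
next
  assume "\<exists>y. y \<noteq> 0 \<and> cone2 a b y \<and> cone2 a' b' y"
  then obtain y where "y \<noteq> 0" "cone2 a b y" "cone2 a' b' y" by blast
  then show "sph_arc a b \<inter> sph_arc a' b' \<noteq> {}" using cone_arc by blast
qed


lemma pos_quot: "(x::real) * y > 0 \<Longrightarrow> x / y > 0"
  by (simp add: zero_less_divide_iff zero_less_mult_iff)

lemma corner:
  fixes A B C E x w :: "real^3"
  assumes D: "det3 A B C \<noteq> 0" and wB: "w = p *\<^sub>R A + q *\<^sub>R B" and wE: "w = r *\<^sub>R C + t *\<^sub>R E"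
    and q: "q > 0" and r: "r \<ge> 0" and t: "t > 0"
    and h1: "det3 A B x * det3 A B C > 0" and h2: "det3 A x C * det3 A B C > 0"
  shows "(\<exists>\<alpha> \<beta> \<gamma>. \<alpha> \<ge> 0 \<and> \<beta> \<ge> 0 \<and> \<gamma> \<ge> 0 \<and> x = \<alpha> *\<^sub>R A + \<beta> *\<^sub>R C + \<gamma> *\<^sub>R w)
     \<or> (\<exists>l k1 k2. l > 0 \<and> k1 > 0 \<and> k2 > 0 \<and> l *\<^sub>R A + x = k1 *\<^sub>R C + k2 *\<^sub>R E)"
proof -
  define \<alpha> where "\<alpha> = det3 x B C / det3 A B C"
  define \<beta> where "\<beta> = det3 A x C / det3 A B C"
  define \<gamma> where "\<gamma> = det3 A B x / det3 A B C"
  have xc: "x = \<alpha> *\<^sub>R A + \<beta> *\<^sub>R B + \<gamma> *\<^sub>R C" unfolding \<alpha>_def \<beta>_def \<gamma>_def by (rule cramer[OF D])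
  have bp: "\<beta> > 0" unfolding \<beta>_def using h2 by (rule pos_quot)
  have gp: "\<gamma> > 0" unfolding \<gamma>_def using h1 by (rule pos_quot)
  have B: "B = (1 / q) *\<^sub>R w - (p / q) *\<^sub>R A" using q unfolding wB
    by (simp add: scaleR_add_right divide_inverse)
  have x2: "x = (\<alpha> - \<beta> * p / q) *\<^sub>R A + (\<beta> / q) *\<^sub>R w + \<gamma> *\<^sub>R C"
    unfolding xc B by (simp add: algebra_simps)
  show ?thesis
  proof (cases "\<alpha> - \<beta> * p / q \<ge> 0")
    case True
    then show ?thesis using x2 bp gp q by (intro disjI1 exI[of _ "\<alpha> - \<beta> * p / q"] exI[of _ \<gamma>] exI[of _ "\<beta> / q"]) (auto simp: algebra_simps)
  next
    case False
    have "(\<beta> * p / q - \<alpha>) *\<^sub>R A + x = (\<beta> / q) *\<^sub>R w + \<gamma> *\<^sub>R C" unfolding x2 by (simp add: algebra_simps)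
    also have "\<dots> = (\<beta> * r / q + \<gamma>) *\<^sub>R C + (\<beta> * t / q) *\<^sub>R E" unfolding wE by (simp add: algebra_simps)
    finally have "(\<beta> * p / q - \<alpha>) *\<^sub>R A + x = (\<beta> * r / q + \<gamma>) *\<^sub>R C + (\<beta> * t / q) *\<^sub>R E" .
    moreover have "\<beta> * p / q - \<alpha> > 0" "\<beta> * r / q + \<gamma> > 0" "\<beta> * t / q > 0"
      using False bp gp q r t by (auto intro: add_nonneg_pos divide_nonneg_pos)
    ultimately show ?thesis by blast
  qed
qed

lemma tri_core:
  fixes A B c d w y0 :: "real^3"
  assumes c: "c = \<alpha> *\<^sub>R A + \<beta> *\<^sub>R B + \<gamma> *\<^sub>R w" and g: "\<gamma> > 0" and notT: "\<not> (\<alpha> \<ge> 0 \<and> \<beta> \<ge> 0)"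
    and y0: "y0 = \<mu> *\<^sub>R A + \<nu> *\<^sub>R B" and mu: "\<mu> > 0" and nu: "\<nu> > 0"
    and y0cd: "y0 = \<mu>' *\<^sub>R c + \<nu>' *\<^sub>R d" and mu': "\<mu>' \<ge> 0" and nu': "\<nu>' \<ge> 0"
  shows "\<exists>y. cone2 c d y \<and> ((\<exists>a g. a \<ge> 0 \<and> g > 0 \<and> y = a *\<^sub>R A + g *\<^sub>R w) \<or> (\<exists>b g. b \<ge> 0 \<and> g > 0 \<and> y = b *\<^sub>R B + g *\<^sub>R w))"
proof (cases "\<alpha> < 0 \<and> \<mu> * \<beta> - \<alpha> * \<nu> \<ge> 0")
  case True
  define y where "y = (- \<alpha>) *\<^sub>R y0 + \<mu> *\<^sub>R c"
  have "y = (\<mu> * \<beta> - \<alpha> * \<nu>) *\<^sub>R B + (\<mu> * \<gamma>) *\<^sub>R w" unfolding y_def y0 c by (simp add: algebra_simps)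
  moreover have "y = (- \<alpha> * \<mu>' + \<mu>) *\<^sub>R c + (- \<alpha> * \<nu>') *\<^sub>R d" unfolding y_def y0cd by (simp add: algebra_simps)
  moreover have "- \<alpha> * \<mu>' + \<mu> \<ge> 0" "- \<alpha> * \<nu>' \<ge> 0"
    using True mu mu' nu' mult_nonneg_nonneg[of "-\<alpha>" \<mu>'] mult_nonneg_nonneg[of "-\<alpha>" \<nu>'] by auto
  ultimately show ?thesis using True mu g unfolding cone2_def by (metis mult_pos_pos)
next
  case False
  have b: "\<beta> < 0" "\<nu> * \<alpha> - \<beta> * \<mu> \<ge> 0"
  proof -
    show "\<beta> < 0"
    proof (cases "\<alpha> < 0")
      case True
      then have "\<mu> * \<beta> < \<alpha> * \<nu>" using False by auto
      also have "\<alpha> * \<nu> < 0" using True nu by (simp add: mult_neg_pos)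
      finally show ?thesis using mu by (simp add: mult_less_0_iff)
    next
      case False then show ?thesis using notT by auto
    qed
    then show "\<nu> * \<alpha> - \<beta> * \<mu> \<ge> 0" using False mu nu by (cases "\<alpha> < 0") (auto simp: algebra_simps intro: mult_nonneg_nonneg, smt (verit) mult_neg_pos mult_nonneg_nonneg)
  qed
  define y where "y = (- \<beta>) *\<^sub>R y0 + \<nu> *\<^sub>R c"
  have "y = (\<nu> * \<alpha> - \<beta> * \<mu>) *\<^sub>R A + (\<nu> * \<gamma>) *\<^sub>R w" unfolding y_def y0 c by (simp add: algebra_simps)
  moreover have "y = (- \<beta> * \<mu>' + \<nu>) *\<^sub>R c + (- \<beta> * \<nu>') *\<^sub>R d" unfolding y_def y0cd by (simp add: algebra_simps)
  moreover have "- \<beta> * \<mu>' + \<nu> \<ge> 0" "- \<beta> * \<nu>' \<ge> 0"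
    using b nu mu' nu' mult_nonneg_nonneg[of "-\<beta>" \<mu>'] mult_nonneg_nonneg[of "-\<beta>" \<nu>'] by auto
  ultimately show ?thesis using b nu g unfolding cone2_def by (metis mult_pos_pos)
qed

lemma tri_cross:
  fixes A B c d w y0 :: "real^3"
  assumes Dw: "det3 A B w \<noteq> 0" and cd: "cone2 c d y0" and AB: "cone2 A B y0" and y0: "y0 \<noteq> 0"
    and nzA: "det3 c d A \<noteq> 0" and nzB: "det3 c d B \<noteq> 0" and nzc: "det3 A B c \<noteq> 0" and nzd: "det3 A B d \<noteq> 0"
    and notc: "\<not> (\<exists>\<alpha> \<beta> \<gamma>. \<alpha> \<ge> 0 \<and> \<beta> \<ge> 0 \<and> \<gamma> \<ge> 0 \<and> c = \<alpha> *\<^sub>R A + \<beta> *\<^sub>R B + \<gamma> *\<^sub>R w)"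
    and notd: "\<not> (\<exists>\<alpha> \<beta> \<gamma>. \<alpha> \<ge> 0 \<and> \<beta> \<ge> 0 \<and> \<gamma> \<ge> 0 \<and> d = \<alpha> *\<^sub>R A + \<beta> *\<^sub>R B + \<gamma> *\<^sub>R w)"
  shows "\<exists>y. cone2 c d y \<and> ((\<exists>a g. a \<ge> 0 \<and> g > 0 \<and> y = a *\<^sub>R A + g *\<^sub>R w) \<or> (\<exists>b g. b \<ge> 0 \<and> g > 0 \<and> y = b *\<^sub>R B + g *\<^sub>R w))"
proof -
  obtain \<mu> \<nu> where m: "\<mu> \<ge> 0" "\<nu> \<ge> 0" "y0 = \<mu> *\<^sub>R A + \<nu> *\<^sub>R B" using AB unfolding cone2_def by blast
  obtain \<mu>' \<nu>' where m': "\<mu>' \<ge> 0" "\<nu>' \<ge> 0" "y0 = \<mu>' *\<^sub>R c + \<nu>' *\<^sub>R d" using cd unfolding cone2_def by blast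
  have d0: "det3 c d y0 = 0" unfolding m'(3) by (simp add: det3_lin)
  have d1: "det3 A B y0 = 0" unfolding m(3) by (simp add: det3_lin)
  have mp: "\<mu> > 0"
  proof (rule ccontr)
    assume "\<not> \<mu> > 0" then have "\<mu> = 0" using m by simp
    then have "\<nu> * det3 c d B = 0" using d0 unfolding m(3) by (simp add: det3_lin)
    then have "\<nu> = 0" using nzB by simp
    then show False using \<open>\<mu> = 0\<close> m y0 by simp
  qed
  have np: "\<nu> > 0"
  proof (rule ccontr)
    assume "\<not> \<nu> > 0" then have "\<nu> = 0" using m by simp
    then have "\<mu> * det3 c d A = 0" using d0 unfolding m(3) by (simp add: det3_lin)
    then have "\<mu> = 0" using nzA by simp
    then show False using \<open>\<nu> = 0\<close> m y0 by simp
  qed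
  have coord: "z = (det3 z B w / det3 A B w) *\<^sub>R A + (det3 A z w / det3 A B w) *\<^sub>R B + (det3 A B z / det3 A B w) *\<^sub>R w" for z
    by (rule cramer[OF Dw])
  have nT: "\<not> (det3 z B w / det3 A B w \<ge> 0 \<and> det3 A z w / det3 A B w \<ge> 0)"
    if "det3 A B z / det3 A B w > 0" "\<not> (\<exists>\<alpha> \<beta> \<gamma>. \<alpha> \<ge> 0 \<and> \<beta> \<ge> 0 \<and> \<gamma> \<ge> 0 \<and> z = \<alpha> *\<^sub>R A + \<beta> *\<^sub>R B + \<gamma> *\<^sub>R w)" for z
    using that coord[of z] by (metis less_eq_real_def)
  have lin: "\<mu>' * (det3 A B c / det3 A B w) + \<nu>' * (det3 A B d / det3 A B w) = 0"
    using d1 unfolding m'(3) by (simp add: det3_lin add_divide_distrib[symmetric])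
  show ?thesis
  proof (cases "det3 A B c / det3 A B w > 0")
    case True
    show ?thesis by (rule tri_core[OF coord[of c] True nT[OF True notc] m(3) mp np m'(3) m'(1,2)])
  next
    case False
    then have cneg: "det3 A B c / det3 A B w < 0" using nzc Dw by (simp add: less_le)
    have "\<mu>' > 0"
    proof (rule ccontr)
      assume "\<not> \<mu>' > 0" then have "\<mu>' = 0" using m' by simp
      then have "\<nu>' * det3 A B d = 0" using d1 unfolding m'(3) by (simp add: det3_lin)
      then have "\<nu>' = 0" using nzd by simp
      then show False using \<open>\<mu>' = 0\<close> m' y0 by simp
    qed
    then have "\<mu>' * (det3 A B c / det3 A B w) < 0" using cneg mult_pos_neg by blast
    then have "\<nu>' * (det3 A B d / det3 A B w) > 0" using lin by linarith
    then have dpos: "det3 A B d / det3 A B w > 0" using m'(2) zero_less_mult_iff[of \<nu>' "det3 A B d / det3 A B w"] by linarith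
    have y0': "y0 = \<nu>' *\<^sub>R d + \<mu>' *\<^sub>R c" using m'(3) by (simp add: add.commute)
    from tri_core[OF coord[of d] dpos nT[OF dpos notd] m(3) mp np y0' m'(2,1)]
    show ?thesis using cone2_sym by blast
  qed
qed


definition nx :: "nat \<Rightarrow> nat \<Rightarrow> nat" where "nx n k = (if Suc k = n then 0 else Suc k)"

lemma Suc_mod_nx: "k < n \<Longrightarrow> Suc k mod n = nx n k"
  unfolding nx_def by (cases "Suc k = n") auto

lemma sph_triangle_iff: "norm x = 1 \<Longrightarrow> x \<in> sph_triangle a b c \<longleftrightarrow>
   (\<exists>\<alpha> \<beta> \<gamma>. \<alpha> \<ge> 0 \<and> \<beta> \<ge> 0 \<and> \<gamma> \<ge> 0 \<and> x = \<alpha> *\<^sub>R a + \<beta> *\<^sub>R b + \<gamma> *\<^sub>R c)"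
  unfolding sph_triangle_def by blast

locale L =
  fixes n j :: nat and u :: "nat \<Rightarrow> real^3" and w :: "real^3"
  assumes poly: "sph_polygon n u" and j2: "2 \<le> j" and jn: "j + 2 \<le> n"
  and only: "\<And>k l. k < n \<Longrightarrow> l < n \<Longrightarrow> \<not> adjacent_edges n k l \<Longrightarrow> edge n u k \<inter> edge n u l \<noteq> {}
        \<Longrightarrow> (k = 0 \<and> l = j) \<or> (k = j \<and> l = 0)"
  and cross: "edge n u 0 \<inter> edge n u j = {w}"
  and T1: "\<And>k. k < n \<Longrightarrow> k \<noteq> 0 \<Longrightarrow> k \<noteq> j \<Longrightarrow> u k \<notin> sph_triangle (u 0) (u j) w"
  and T2: "\<And>k. k < n \<Longrightarrow> k \<noteq> 1 \<Longrightarrow> k \<noteq> Suc j \<Longrightarrow> u k \<notin> sph_triangle (u 1) (u (Suc j)) w"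
begin

lemma n4: "4 \<le> n" using j2 jn by simp

lemma nondeg: "a < n \<Longrightarrow> b < n \<Longrightarrow> c < n \<Longrightarrow> a \<noteq> b \<Longrightarrow> b \<noteq> c \<Longrightarrow> a \<noteq> c \<Longrightarrow> det3 (u a) (u b) (u c) \<noteq> 0"
  using poly unfolding sph_polygon_def by blast

lemma norm1: "k < n \<Longrightarrow> norm (u k) = 1"
  using poly unfolding sph_polygon_def by blast

lemma nx_lt: "k < n \<Longrightarrow> nx n k < n" unfolding nx_def using n4 by auto
lemma nx_ne: "k < n \<Longrightarrow> nx n k \<noteq> k" unfolding nx_def using n4 by auto
lemma nx_nx_ne: "k < n \<Longrightarrow> nx n (nx n k) \<noteq> k" unfolding nx_def using n4 by auto

lemma edge_nx: "k < n \<Longrightarrow> edge n u k = sph_arc (u k) (u (nx n k))"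
  unfolding edge_def vtx_def using Suc_mod_nx nx_lt by simp

lemma adj_iff: "k < n \<Longrightarrow> l < n \<Longrightarrow> adjacent_edges n k l \<longleftrightarrow> k = l \<or> nx n k = l \<or> nx n l = k"
  unfolding adjacent_edges_def using Suc_mod_nx by simp

lemma indep2:
  assumes "x < n" "z < n" "x \<noteq> z" "a *\<^sub>R u x + b *\<^sub>R u z = 0"
  shows "a = 0 \<and> b = 0"
proof -
  define g where "g = (if x \<noteq> 0 \<and> z \<noteq> 0 then 0 else if x \<noteq> 1 \<and> z \<noteq> 1 then 1 else (2::nat))"
  have g: "g < n" "g \<noteq> x" "g \<noteq> z" unfolding g_def using n4 assms(3) by auto
  have "det3 (u x) (u z) (u g) \<noteq> 0" using nondeg assms g by auto
  moreover have "a *\<^sub>R u x + b *\<^sub>R u z + 0 *\<^sub>R u g = 0" using assms by simp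
  ultimately show ?thesis using indep3 by blast
qed

lemma notvert:
  assumes y: "y = a1 *\<^sub>R u x + a2 *\<^sub>R u z" and a: "a1 > 0" "a2 > 0" and xz: "x < n" "z < n" "x \<noteq> z"
    and m: "m < n"
  shows "y \<noteq> c *\<^sub>R u m"
proof
  assume yc: "y = c *\<^sub>R u m"
  consider "m = x" | "m = z" | "m \<noteq> x \<and> m \<noteq> z" by blast
  then show False
  proof cases
    case 1
    have "(a1 - c) *\<^sub>R u x + a2 *\<^sub>R u z = (a1 *\<^sub>R u x + a2 *\<^sub>R u z) - c *\<^sub>R u x" by (simp add: scaleR_diff_left)
    also have "\<dots> = 0" using y yc 1 by simp
    finally have "(a1 - c) *\<^sub>R u x + a2 *\<^sub>R u z = 0" .
    then have "a2 = 0" using indep2[OF xz] by blast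
    then show False using a by simp
  next
    case 2
    have "a1 *\<^sub>R u x + (a2 - c) *\<^sub>R u z = (a1 *\<^sub>R u x + a2 *\<^sub>R u z) - c *\<^sub>R u z" by (simp add: scaleR_diff_left)
    also have "\<dots> = 0" using y yc 2 by simp
    finally have "a1 *\<^sub>R u x + (a2 - c) *\<^sub>R u z = 0" .
    then have "a1 = 0" using indep2[OF xz] by blast
    then show False using a by simp
  next
    case 3
    then have "det3 (u x) (u z) (u m) \<noteq> 0" using nondeg xz m by auto
    moreover have "a1 *\<^sub>R u x + a2 *\<^sub>R u z + (- c) *\<^sub>R u m = 0" using y yc by simp
    ultimately have "a1 = 0" using indep3 by blast
    then show False using a by simp
  qed
qed

lemma only2:
  assumes kl: "k < n" "l < n" "k \<noteq> l" and y0: "y \<noteq> 0"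
    and ck: "cone2 (u k) (u (nx n k)) y" and cl: "cone2 (u l) (u (nx n l)) y"
    and hv: "\<And>m c. m < n \<Longrightarrow> y \<noteq> c *\<^sub>R u m"
  shows "(k = 0 \<and> l = j) \<or> (k = j \<and> l = 0)"
proof (cases "adjacent_edges n k l")
  case False
  have "(1 / norm y) *\<^sub>R y \<in> edge n u k" "(1 / norm y) *\<^sub>R y \<in> edge n u l"
    using cone_arc[OF ck y0] cone_arc[OF cl y0] edge_nx kl by auto
  then show ?thesis using only[OF kl(1,2) False] by blast
next
  case True
  have gen: False if h: "a < n" "nx n a < n" "cone2 (u a) (u (nx n a)) y" "cone2 (u (nx n a)) (u (nx n (nx n a))) y" for a
  proof -
    obtain \<mu> \<nu> where m: "y = \<mu> *\<^sub>R u a + \<nu> *\<^sub>R u (nx n a)" using h(3) unfolding cone2_def by blast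
    obtain \<mu>' \<nu>' where m': "y = \<mu>' *\<^sub>R u (nx n a) + \<nu>' *\<^sub>R u (nx n (nx n a))" using h(4) unfolding cone2_def by blast
    have X: "nx n (nx n a) < n" "a \<noteq> nx n a" "nx n a \<noteq> nx n (nx n a)" "a \<noteq> nx n (nx n a)"
      using nx_lt[OF h(2)] nx_ne[OF h(1)] nx_ne[OF h(2)] nx_nx_ne[OF h(1)] by metis+
    have "det3 (u a) (u (nx n a)) (u (nx n (nx n a))) \<noteq> 0"
      by (rule nondeg[OF h(1) h(2) X])
    moreover have "\<mu> *\<^sub>R u a + (\<nu> - \<mu>') *\<^sub>R u (nx n a) + (- \<nu>') *\<^sub>R u (nx n (nx n a)) = 0"
      using m m' by (simp add: algebra_simps)
    ultimately have "\<mu> = 0" using indep3 by blast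
    then have "y = \<nu> *\<^sub>R u (nx n a)" using m by simp
    then show False using hv h(2) by blast
  qed
  from True consider "nx n k = l" | "nx n l = k" using adj_iff kl by blast
  then show ?thesis
  proof cases
    case 1 then show ?thesis using gen[of k] kl ck cl by blast
  next
    case 2 then show ?thesis using gen[of l] kl ck cl by blast
  qed
qed

lemma no_meet:
  assumes e: "ei < n" "ej < n" "ei \<noteq> ej" "\<not> ((ei = 0 \<and> ej = j) \<or> (ei = j \<and> ej = 0))"
    and y: "y = ka *\<^sub>R u x + kb *\<^sub>R u z" and a: "ka > 0" "kb > 0" and xz: "x < n" "z < n" "x \<noteq> z"
    and c1: "cone2 (u ei) (u (nx n ei)) y" and c2: "cone2 (u ej) (u (nx n ej)) y"
  shows False
proof -
  have hv: "\<And>m c. m < n \<Longrightarrow> y \<noteq> c *\<^sub>R u m" using notvert[OF y a xz] by blast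
  have "y \<noteq> 0" using hv[of 0 0] n4 by simp
  then show False using only2[OF e(1-3) _ c1 c2 hv] e(4) by blast
qed

end


context L begin

lemma nx0: "nx n 0 = 1" unfolding nx_def using n4 by auto
lemma nxj: "nx n j = Suc j" unfolding nx_def using jn by auto
lemma nxn1: "nx n (n - 1) = 0" unfolding nx_def using n4 by auto

lemma wdec: "\<exists>p q r t. p > 0 \<and> q > 0 \<and> r > 0 \<and> t > 0 \<and> w = p *\<^sub>R u 0 + q *\<^sub>R u 1 \<and> w = r *\<^sub>R u j + t *\<^sub>R u (Suc j)"
proof -
  have w0: "w \<in> sph_arc (u 0) (u 1)" using cross edge_nx[of 0] nx0 n4 by auto
  have wj: "w \<in> sph_arc (u j) (u (Suc j))" using cross edge_nx[of j] nxj jn by auto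
  have "det3 (u 0) (u 1) (u 2) \<noteq> 0" by (rule nondeg) (use n4 in auto)
  from arc_cone[OF this w0] obtain p q where pq: "p \<ge> 0" "q \<ge> 0" "w = p *\<^sub>R u 0 + q *\<^sub>R u 1" and wnz: "w \<noteq> 0"
    unfolding cone2_def by blast
  have "det3 (u j) (u (Suc j)) (u 0) \<noteq> 0" by (rule nondeg) (use j2 jn in auto)
  from arc_cone[OF this wj] obtain r t where rt: "r \<ge> 0" "t \<ge> 0" "w = r *\<^sub>R u j + t *\<^sub>R u (Suc j)"
    unfolding cone2_def by blast
  have d1: "det3 (u 1) (u j) (u (Suc j)) \<noteq> 0" by (rule nondeg) (use j2 jn in auto)
  have d2: "det3 (u 0) (u j) (u (Suc j)) \<noteq> 0" by (rule nondeg) (use j2 jn in auto)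
  have d3: "det3 (u 0) (u 1) (u (Suc j)) \<noteq> 0" by (rule nondeg) (use j2 jn in auto)
  have d4: "det3 (u 0) (u 1) (u j) \<noteq> 0" by (rule nondeg) (use j2 jn in auto)
  have "p *\<^sub>R u 0 + q *\<^sub>R u 1 - r *\<^sub>R u j - t *\<^sub>R u (Suc j) = w - (r *\<^sub>R u j + t *\<^sub>R u (Suc j))"
    unfolding pq(3) by (simp add: algebra_simps)
  also have "\<dots> = 0" using rt(3) by simp
  finally have rel: "p *\<^sub>R u 0 + q *\<^sub>R u 1 - r *\<^sub>R u j - t *\<^sub>R u (Suc j) = 0" .
  have "p \<noteq> 0"
  proof
    assume "p = 0"
    then have "q *\<^sub>R u 1 + (- r) *\<^sub>R u j + (- t) *\<^sub>R u (Suc j) = 0" using rel by simp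
    then have "q = 0" using indep3[OF d1] by blast
    then show False using \<open>p = 0\<close> pq wnz by simp
  qed
  moreover have "q \<noteq> 0"
  proof
    assume "q = 0"
    then have "p *\<^sub>R u 0 + (- r) *\<^sub>R u j + (- t) *\<^sub>R u (Suc j) = 0" using rel by simp
    then have "p = 0" using indep3[OF d2] by blast
    then show False using \<open>q = 0\<close> pq wnz by simp
  qed
  moreover have "r \<noteq> 0"
  proof
    assume "r = 0"
    then have "p *\<^sub>R u 0 + q *\<^sub>R u 1 + (- t) *\<^sub>R u (Suc j) = 0" using rel by simp
    then have "p = 0 \<and> q = 0" using indep3[OF d3] by blast
    then show False using pq wnz by simp
  qed
  moreover have "t \<noteq> 0"
  proof
    assume "t = 0"
    then have "p *\<^sub>R u 0 + q *\<^sub>R u 1 + (- r) *\<^sub>R u j = 0" using rel by simp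
    then have "p = 0 \<and> q = 0" using indep3[OF d4] by blast
    then show False using pq wnz by simp
  qed
  ultimately show ?thesis using pq rt by (intro exI[of _ p] exI[of _ q] exI[of _ r] exI[of _ t]) auto
qed

end

locale L2 = L +
  fixes p q r t :: real
  assumes p: "p > 0" and q: "q > 0" and r: "r > 0" and t: "t > 0"
    and wB: "w = p *\<^sub>R u 0 + q *\<^sub>R u 1" and wE: "w = r *\<^sub>R u j + t *\<^sub>R u (Suc j)"
begin

lemma sig_nz: "det3 (u 0) (u 1) (u j) \<noteq> 0" by (rule nondeg) (use j2 jn in auto)

lemma F1: "det3 (u 0) (u j) (u (Suc j)) * det3 (u 0) (u 1) (u j) < 0"
proof -
  let ?s = "det3 (u 0) (u 1) (u j)" and ?X = "det3 (u 0) (u j) (u (Suc j))"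
  have a: "det3 (u 0) (u j) w = q * det3 (u 0) (u j) (u 1)" unfolding wB by (simp add: det3_lin)
  have b: "det3 (u 0) (u j) w = t * ?X" unfolding wE by (simp add: det3_lin)
  have "det3 (u 0) (u j) (u 1) = - ?s" by (rule det3_swap23)
  then have e: "t * ?X = - q * ?s" using a b by simp
  then have "t * (?X * ?s) = - q * (?s * ?s)" by algebra
  moreover have "?s * ?s > 0" using sig_nz not_real_square_gt_zero by blast
  ultimately have "t * (?X * ?s) < 0" using q by (simp add: mult_pos_pos)
  then show ?thesis using t by (simp add: mult_less_0_iff)
qed

lemma F2: "det3 (u 0) (u 1) (u (Suc j)) * det3 (u 0) (u 1) (u j) < 0"
proof -
  let ?s = "det3 (u 0) (u 1) (u j)" and ?X = "det3 (u 0) (u 1) (u (Suc j))"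
  have a: "det3 (u 0) (u 1) w = 0" unfolding wB by (simp add: det3_lin)
  have b: "det3 (u 0) (u 1) w = r * ?s + t * ?X" unfolding wE by (simp add: det3_lin)
  have e: "t * ?X = - r * ?s" using a b by simp
  then have "t * (?X * ?s) = - r * (?s * ?s)" by algebra
  moreover have "?s * ?s > 0" using sig_nz not_real_square_gt_zero by blast
  ultimately have "t * (?X * ?s) < 0" using r by (simp add: mult_pos_pos)
  then show ?thesis using t by (simp add: mult_less_0_iff)
qed

lemma F3: "det3 (u j) (u (Suc j)) (u 1) * det3 (u 0) (u 1) (u j) > 0"
proof -
  let ?s = "det3 (u 0) (u 1) (u j)" and ?X = "det3 (u 0) (u j) (u (Suc j))" and ?Z = "det3 (u j) (u (Suc j)) (u 1)"
  have a: "det3 (u j) (u (Suc j)) w = 0" unfolding wE by (simp add: det3_lin)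
  have b: "det3 (u j) (u (Suc j)) w = p * det3 (u j) (u (Suc j)) (u 0) + q * ?Z" unfolding wB by (simp add: det3_lin)
  have c: "det3 (u j) (u (Suc j)) (u 0) = ?X" by (rule det3_cyc)
  have e: "q * ?Z = - p * ?X" using a b c by simp
  then have "q * (?Z * ?s) = - p * (?X * ?s)" by algebra
  moreover have "p * (?X * ?s) < 0" by (rule mult_pos_neg[OF p F1])
  ultimately have "q * (?Z * ?s) > 0" by linarith
  then show ?thesis using q by (simp add: zero_less_mult_iff)
qed

end


lemma sg1: "(a::real) * s < 0 \<Longrightarrow> b * s < 0 \<Longrightarrow> a * b > 0"
  by (auto simp: mult_less_0_iff zero_less_mult_iff)
lemma sg2: "(a::real) * s > 0 \<Longrightarrow> b * s > 0 \<Longrightarrow> a * b > 0"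
  by (auto simp: mult_less_0_iff zero_less_mult_iff)

lemma cone2I: "\<mu> \<ge> 0 \<Longrightarrow> \<nu> \<ge> 0 \<Longrightarrow> y = \<mu> *\<^sub>R a + \<nu> *\<^sub>R b \<Longrightarrow> cone2 a b y"
  unfolding cone2_def by blast

context L begin
lemma nx_Suc: "Suc k < n \<Longrightarrow> nx n k = Suc k" unfolding nx_def by auto
lemma tri_mem: "k < n \<Longrightarrow> u k = \<alpha> *\<^sub>R a + \<beta> *\<^sub>R b + \<gamma> *\<^sub>R c \<Longrightarrow> \<alpha> \<ge> 0 \<Longrightarrow> \<beta> \<ge> 0 \<Longrightarrow> \<gamma> \<ge> 0
   \<Longrightarrow> u k \<in> sph_triangle a b c"
  unfolding sph_triangle_def using norm1 by blast
end

context L2 begin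

lemma e1: "\<not> (det3 (u 0) (u 1) (u j) * det3 (u (n-1)) (u 0) (u 1) > 0 \<and>
               det3 (u 0) (u 1) (u j) * det3 (u (n-1)) (u 0) (u j) < 0)"
proof
  assume h: "det3 (u 0) (u 1) (u j) * det3 (u (n-1)) (u 0) (u 1) > 0 \<and>
               det3 (u 0) (u 1) (u j) * det3 (u (n-1)) (u 0) (u j) < 0"
  have eq1: "det3 (u (n-1)) (u 0) (u 1) = det3 (u 0) (u 1) (u (n-1))" by (simp add: det3_expand algebra_simps)
  have eq2: "det3 (u (n-1)) (u 0) (u j) = - det3 (u 0) (u (n-1)) (u j)" by (simp add: det3_expand algebra_simps)
  have h1: "det3 (u 0) (u 1) (u (n-1)) * det3 (u 0) (u 1) (u j) > 0"
    using h unfolding eq1 by (simp add: mult.commute)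
  have h2: "det3 (u 0) (u (n-1)) (u j) * det3 (u 0) (u 1) (u j) > 0"
    using h unfolding eq2 by (simp add: mult.commute)
  from corner[OF sig_nz wB wE q less_imp_le[OF r] t h1 h2]
  show False
  proof (elim disjE exE conjE)
    fix \<alpha> \<beta> \<gamma> :: real assume "\<alpha> \<ge> 0" "\<beta> \<ge> 0" "\<gamma> \<ge> 0" "u (n-1) = \<alpha> *\<^sub>R u 0 + \<beta> *\<^sub>R u j + \<gamma> *\<^sub>R w"
    then have "u (n-1) \<in> sph_triangle (u 0) (u j) w" using tri_mem[of "n-1"] n4 by auto
    moreover have "n-1 < n" "n-1 \<noteq> 0" "n-1 \<noteq> j" using n4 jn by auto
    ultimately show False using T1 by blast
  next
    fix l k1 k2 :: real assume kl: "l > 0" "k1 > 0" "k2 > 0" and eq: "l *\<^sub>R u 0 + u (n-1) = k1 *\<^sub>R u j + k2 *\<^sub>R u (Suc j)"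
    show False
    proof (rule no_meet[where ei="n-1" and ej=j and y="k1 *\<^sub>R u j + k2 *\<^sub>R u (Suc j)" and ka=k1 and x=j and kb=k2 and z="Suc j"])
      show "cone2 (u (n - 1)) (u (nx n (n - 1))) (k1 *\<^sub>R u j + k2 *\<^sub>R u (Suc j))"
        unfolding nxn1 using kl eq by (intro cone2I[of 1 l]) (auto simp: add.commute)
      show "cone2 (u j) (u (nx n j)) (k1 *\<^sub>R u j + k2 *\<^sub>R u (Suc j))"
        unfolding nxj using kl by (intro cone2I[of k1 k2]) auto
    qed (use kl n4 jn j2 in auto)
  qed
qed

lemma e2: "\<not> (det3 (u 0) (u 1) (u j) * det3 (u (j-1)) (u j) (u (Suc j)) < 0 \<and>
               det3 (u 0) (u 1) (u j) * det3 (u 0) (u j) (u (j-1)) < 0)"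
proof
  assume h: "det3 (u 0) (u 1) (u j) * det3 (u (j-1)) (u j) (u (Suc j)) < 0 \<and>
               det3 (u 0) (u 1) (u j) * det3 (u 0) (u j) (u (j-1)) < 0"
  have Dj: "det3 (u j) (u (Suc j)) (u 0) = det3 (u 0) (u j) (u (Suc j))" by (rule det3_cyc)
  have D: "det3 (u j) (u (Suc j)) (u 0) \<noteq> 0" by (rule nondeg) (use j2 jn in auto)
  have eq1: "det3 (u j) (u (Suc j)) (u (j-1)) = det3 (u (j-1)) (u j) (u (Suc j))" by (simp add: det3_expand algebra_simps)
  have eq2: "det3 (u j) (u (j-1)) (u 0) = det3 (u 0) (u j) (u (j-1))" by (simp add: det3_expand algebra_simps)
  have h1: "det3 (u j) (u (Suc j)) (u (j-1)) * det3 (u j) (u (Suc j)) (u 0) > 0"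
    unfolding Dj eq1
    by (rule sg1[OF _ F1]) (use h in \<open>simp add: mult.commute\<close>)
  have h2: "det3 (u j) (u (j-1)) (u 0) * det3 (u j) (u (Suc j)) (u 0) > 0"
    unfolding Dj eq2
    by (rule sg1[OF _ F1]) (use h in \<open>simp add: mult.commute\<close>)
  from corner[OF D wE wB t less_imp_le[OF p] q h1 h2]
  show False
  proof (elim disjE exE conjE)
    fix \<alpha> \<beta> \<gamma> :: real assume ab: "\<alpha> \<ge> 0" "\<beta> \<ge> 0" "\<gamma> \<ge> 0" and eq: "u (j-1) = \<alpha> *\<^sub>R u j + \<beta> *\<^sub>R u 0 + \<gamma> *\<^sub>R w"
    have "u (j-1) = \<beta> *\<^sub>R u 0 + \<alpha> *\<^sub>R u j + \<gamma> *\<^sub>R w" using eq by (simp add: algebra_simps)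
    then have "u (j-1) \<in> sph_triangle (u 0) (u j) w" using tri_mem[of "j-1"] ab jn by auto
    moreover have "j-1 < n" "j-1 \<noteq> 0" "j-1 \<noteq> j" using j2 jn by auto
    ultimately show False using T1 by blast
  next
    fix l k1 k2 :: real assume kl: "l > 0" "k1 > 0" "k2 > 0" and eq: "l *\<^sub>R u j + u (j-1) = k1 *\<^sub>R u 0 + k2 *\<^sub>R u 1"
    have nn: "nx n (j-1) = j" using nx_Suc[of "j-1"] j2 jn by auto
    show False
    proof (rule no_meet[where ei="j-1" and ej=0 and y="k1 *\<^sub>R u 0 + k2 *\<^sub>R u 1" and ka=k1 and x=0 and kb=k2 and z=1])
      show "cone2 (u (j-1)) (u (nx n (j-1))) (k1 *\<^sub>R u 0 + k2 *\<^sub>R u 1)"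
        unfolding nn using kl eq by (intro cone2I[of 1 l]) (auto simp: add.commute)
      show "cone2 (u 0) (u (nx n 0)) (k1 *\<^sub>R u 0 + k2 *\<^sub>R u 1)"
        unfolding nx0 using kl by (intro cone2I[of k1 k2]) auto
    qed (use kl n4 jn j2 in auto)
  qed
qed


lemma e3: "\<not> (det3 (u 0) (u 1) (u j) * det3 (u 0) (u 1) (u 2) < 0 \<and>
               det3 (u 0) (u 1) (u j) * det3 (u 2) (u 1) (u (Suc j)) < 0)"
proof
  assume h: "det3 (u 0) (u 1) (u j) * det3 (u 0) (u 1) (u 2) < 0 \<and>
               det3 (u 0) (u 1) (u j) * det3 (u 2) (u 1) (u (Suc j)) < 0"
  have D1: "det3 (u 1) (u 0) (u (Suc j)) = - det3 (u 0) (u 1) (u (Suc j))" by (simp add: det3_expand algebra_simps)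
  have D: "det3 (u 1) (u 0) (u (Suc j)) \<noteq> 0" by (rule nondeg) (use j2 jn in auto)
  have Dp: "det3 (u 1) (u 0) (u (Suc j)) * det3 (u 0) (u 1) (u j) > 0" unfolding D1 using F2 by simp
  have eq1: "det3 (u 1) (u 0) (u 2) = - det3 (u 0) (u 1) (u 2)" by (simp add: det3_expand algebra_simps)
  have eq2: "det3 (u 1) (u 2) (u (Suc j)) = - det3 (u 2) (u 1) (u (Suc j))" by (simp add: det3_expand algebra_simps)
  have h1: "det3 (u 1) (u 0) (u 2) * det3 (u 1) (u 0) (u (Suc j)) > 0"
    by (rule sg2[OF _ Dp]) (use h in \<open>unfold eq1, simp add: mult.commute\<close>)
  have h2: "det3 (u 1) (u 2) (u (Suc j)) * det3 (u 1) (u 0) (u (Suc j)) > 0"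
    by (rule sg2[OF _ Dp]) (use h in \<open>unfold eq2, simp add: mult.commute\<close>)
  have wB': "w = q *\<^sub>R u 1 + p *\<^sub>R u 0" using wB by (simp add: add.commute)
  have wE': "w = t *\<^sub>R u (Suc j) + r *\<^sub>R u j" using wE by (simp add: add.commute)
  from corner[OF D wB' wE' p less_imp_le[OF t] r h1 h2]
  show False
  proof (elim disjE exE conjE)
    fix \<alpha> \<beta> \<gamma> :: real assume ab: "\<alpha> \<ge> 0" "\<beta> \<ge> 0" "\<gamma> \<ge> 0" and eq: "u 2 = \<alpha> *\<^sub>R u 1 + \<beta> *\<^sub>R u (Suc j) + \<gamma> *\<^sub>R w"
    then have "u 2 \<in> sph_triangle (u 1) (u (Suc j)) w" using tri_mem[of 2] n4 by auto
    moreover have "2 < n" "(2::nat) \<noteq> 1" "2 \<noteq> Suc j" using n4 j2 by auto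
    ultimately show False using T2 by blast
  next
    fix l k1 k2 :: real assume kl: "l > 0" "k1 > 0" "k2 > 0" and eq: "l *\<^sub>R u 1 + u 2 = k1 *\<^sub>R u (Suc j) + k2 *\<^sub>R u j"
    have nn: "nx n 1 = 2" using nx_Suc[of 1] n4 by auto
    show False
    proof (rule no_meet[where ei=1 and ej=j and y="k2 *\<^sub>R u j + k1 *\<^sub>R u (Suc j)" and ka=k2 and x=j and kb=k1 and z="Suc j"])
      show "cone2 (u 1) (u (nx n 1)) (k2 *\<^sub>R u j + k1 *\<^sub>R u (Suc j))"
        unfolding nn using kl eq by (intro cone2I[of l 1]) (auto simp: add.commute)
      show "cone2 (u j) (u (nx n j)) (k2 *\<^sub>R u j + k1 *\<^sub>R u (Suc j))"
        unfolding nxj using kl by (intro cone2I[of k2 k1]) auto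
    qed (use kl n4 jn j2 in auto)
  qed
qed

lemma e4: "\<not> (det3 (u 0) (u 1) (u j) * det3 (u j) (u (Suc j)) (u (nx n (Suc j))) > 0 \<and>
               det3 (u 0) (u 1) (u j) * det3 (u 1) (u (Suc j)) (u (nx n (Suc j))) < 0)"
proof
  let ?x = "nx n (Suc j)"
  assume h: "det3 (u 0) (u 1) (u j) * det3 (u j) (u (Suc j)) (u ?x) > 0 \<and>
               det3 (u 0) (u 1) (u j) * det3 (u 1) (u (Suc j)) (u ?x) < 0"
  have xl: "?x < n" using nx_lt jn by simp
  have x1: "?x \<noteq> 1" "?x \<noteq> Suc j" "?x \<noteq> j" unfolding nx_def using n4 jn by auto
  have D1: "det3 (u (Suc j)) (u j) (u 1) = - det3 (u j) (u (Suc j)) (u 1)" by (simp add: det3_expand algebra_simps)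
  have D: "det3 (u (Suc j)) (u j) (u 1) \<noteq> 0" by (rule nondeg) (use j2 jn in auto)
  have Dn: "det3 (u (Suc j)) (u j) (u 1) * det3 (u 0) (u 1) (u j) < 0" unfolding D1 using F3 by simp
  have eq1: "det3 (u (Suc j)) (u j) (u ?x) = - det3 (u j) (u (Suc j)) (u ?x)" by (simp add: det3_expand algebra_simps)
  have eq2: "det3 (u (Suc j)) (u ?x) (u 1) = det3 (u 1) (u (Suc j)) (u ?x)" by (simp add: det3_expand algebra_simps)
  have h1: "det3 (u (Suc j)) (u j) (u ?x) * det3 (u (Suc j)) (u j) (u 1) > 0"
    by (rule sg1[OF _ Dn]) (use h in \<open>unfold eq1, simp add: mult.commute\<close>)
  have h2: "det3 (u (Suc j)) (u ?x) (u 1) * det3 (u (Suc j)) (u j) (u 1) > 0"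
    by (rule sg1[OF _ Dn]) (use h in \<open>unfold eq2, simp add: mult.commute\<close>)
  have wB': "w = t *\<^sub>R u (Suc j) + r *\<^sub>R u j" using wE by (simp add: add.commute)
  have wE': "w = q *\<^sub>R u 1 + p *\<^sub>R u 0" using wB by (simp add: add.commute)
  from corner[OF D wB' wE' r less_imp_le[OF q] p h1 h2]
  show False
  proof (elim disjE exE conjE)
    fix \<alpha> \<beta> \<gamma> :: real assume ab: "\<alpha> \<ge> 0" "\<beta> \<ge> 0" "\<gamma> \<ge> 0" and eq: "u ?x = \<alpha> *\<^sub>R u (Suc j) + \<beta> *\<^sub>R u 1 + \<gamma> *\<^sub>R w"
    have "u ?x = \<beta> *\<^sub>R u 1 + \<alpha> *\<^sub>R u (Suc j) + \<gamma> *\<^sub>R w" using eq by (simp add: algebra_simps)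
    then have "u ?x \<in> sph_triangle (u 1) (u (Suc j)) w" using tri_mem[OF xl] ab by auto
    then show False using T2 xl x1 by blast
  next
    fix l k1 k2 :: real assume kl: "l > 0" "k1 > 0" "k2 > 0" and eq: "l *\<^sub>R u (Suc j) + u ?x = k1 *\<^sub>R u 1 + k2 *\<^sub>R u 0"
    show False
    proof (rule no_meet[where ei="Suc j" and ej=0 and y="k2 *\<^sub>R u 0 + k1 *\<^sub>R u 1" and ka=k2 and x=0 and kb=k1 and z=1])
      show "cone2 (u (Suc j)) (u (nx n (Suc j))) (k2 *\<^sub>R u 0 + k1 *\<^sub>R u 1)"
        using kl eq by (intro cone2I[of l 1]) (auto simp: add.commute)
      show "cone2 (u 0) (u (nx n 0)) (k2 *\<^sub>R u 0 + k1 *\<^sub>R u 1)"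
        unfolding nx0 using kl by (intro cone2I[of k2 k1]) auto
    qed (use kl n4 jn j2 in auto)
  qed
qed

end


context L begin

definition P where "P = two_opt n u 0 j"

lemma P_val: "k < n \<Longrightarrow> P k = (if k = 0 then u 0 else if k \<le> j then u (j + 1 - k) else u k)"
proof -
  assume k: "k < n"
  have m: "(j + n - 0) mod n = j" using jn by simp
  have a: "(j + n + 1 - k) mod n = j + 1 - k" if "k \<le> j" "k \<noteq> 0"
  proof -
    have e: "j + n + 1 - k = (j + 1 - k) + n" using that by simp
    have "(j + 1 - k) mod n = j + 1 - k" using that jn by simp
    then show ?thesis unfolding e by simp
  qed
  have b: "(j + k - j) mod n = k" using k by simp
  show ?thesis unfolding P_def two_opt_def Let_def m using a b by auto
qed

lemma vtxP: "k < n \<Longrightarrow> vtx n P k = P k" unfolding vtx_def by simp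

lemma edgeP: "k < n \<Longrightarrow> edge n P k = sph_arc (P k) (P (nx n k))"
  unfolding edge_def vtx_def using Suc_mod_nx nx_lt by simp

definition g where "g k = (if k < j then j - k else k)"

lemma edgeP0: "edge n P 0 = sph_arc (u 0) (u j)"
  using edgeP[of 0] n4 nx0 P_val[of 0] P_val[of 1] j2 by simp

lemma edgePj: "edge n P j = sph_arc (u 1) (u (Suc j))"
proof -
  have "P j = u 1" using P_val[of j] j2 jn by simp
  moreover have "P (nx n j) = u (Suc j)" using P_val[of "Suc j"] nxj jn by simp
  ultimately show ?thesis using edgeP[of j] jn by simp
qed

lemma edgeP_old: assumes "k < n" "k \<noteq> 0" "k \<noteq> j" shows "edge n P k = edge n u (g k)"
proof (cases "k < j")
  case True
  have "P k = u (j + 1 - k)" using P_val[of k] assms True by simp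
  moreover have "nx n k = Suc k" using nx_Suc[of k] True jn by simp
  moreover have "P (Suc k) = u (j - k)" using P_val[of "Suc k"] assms True jn by simp
  moreover have "nx n (j - k) = j + 1 - k" using nx_Suc[of "j - k"] True jn by simp
  ultimately show ?thesis using edgeP[of k] edge_nx[of "j - k"] assms True jn unfolding g_def
    by (simp add: arc_sym)
next
  case False
  then have kj: "k > j" using assms by simp
  have "P k = u k" using P_val[of k] assms kj by simp
  moreover have "P (nx n k) = u (nx n k)"
    using P_val[of "nx n k"] nx_lt[of k] assms kj unfolding nx_def by auto
  ultimately show ?thesis using edgeP[of k] edge_nx[of k] assms kj unfolding g_def by simp
qed

end

context L2 begin

lemma N12: "sph_arc (u 0) (u j) \<inter> sph_arc (u 1) (u (Suc j)) = {}"
proof (rule ccontr)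
  assume "sph_arc (u 0) (u j) \<inter> sph_arc (u 1) (u (Suc j)) \<noteq> {}"
  then obtain x where x: "x \<in> sph_arc (u 0) (u j)" "x \<in> sph_arc (u 1) (u (Suc j))" by blast
  have d1: "det3 (u 0) (u j) (u 1) \<noteq> 0" by (rule nondeg) (use j2 jn in auto)
  have d2: "det3 (u 1) (u (Suc j)) (u 0) \<noteq> 0" by (rule nondeg) (use j2 jn in auto)
  obtain \<mu> \<nu> where m: "\<mu> \<ge> 0" "\<nu> \<ge> 0" "x = \<mu> *\<^sub>R u 0 + \<nu> *\<^sub>R u j" and xnz: "x \<noteq> 0"
    using arc_cone[OF d1 x(1)] unfolding cone2_def by blast
  obtain \<mu>' \<nu>' where m': "\<mu>' \<ge> 0" "\<nu>' \<ge> 0" "x = \<mu>' *\<^sub>R u 1 + \<nu>' *\<^sub>R u (Suc j)"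
    using arc_cone[OF d2 x(2)] unfolding cone2_def by blast
  have tu: "t *\<^sub>R u (Suc j) = p *\<^sub>R u 0 + q *\<^sub>R u 1 - r *\<^sub>R u j" using wB wE by (metis add_diff_cancel_left')
  have "(t * \<mu> - \<nu>' * p) *\<^sub>R u 0 + (- (t * \<mu>' + \<nu>' * q)) *\<^sub>R u 1 + (t * \<nu> + \<nu>' * r) *\<^sub>R u j
      = t *\<^sub>R (\<mu> *\<^sub>R u 0 + \<nu> *\<^sub>R u j) - t *\<^sub>R (\<mu>' *\<^sub>R u 1) - \<nu>' *\<^sub>R (p *\<^sub>R u 0 + q *\<^sub>R u 1 - r *\<^sub>R u j)"
    by (simp add: algebra_simps)
  also have "\<dots> = t *\<^sub>R x - t *\<^sub>R (\<mu>' *\<^sub>R u 1 + \<nu>' *\<^sub>R u (Suc j))"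
    unfolding m(3) tu[symmetric] by (simp add: algebra_simps)
  also have "\<dots> = 0" using m'(3) by simp
  finally have "- (t * \<mu>' + \<nu>' * q) = 0" using indep3[OF sig_nz] by blast
  then have "t * \<mu>' + \<nu>' * q = 0" by simp
  then have "\<mu>' = 0" "\<nu>' = 0" using t q m'(1,2)
    by (smt (verit) mult_nonneg_nonneg mult_pos_pos)+
  then show False using m'(3) xnz by simp
qed

lemma Dw1: "det3 (u 0) (u j) w \<noteq> 0"
proof -
  have "det3 (u 0) (u j) w = q * det3 (u 0) (u j) (u 1)" unfolding wB by (simp add: det3_lin)
  moreover have "det3 (u 0) (u j) (u 1) \<noteq> 0" by (rule nondeg) (use j2 jn in auto)
  ultimately show ?thesis using q by simp
qed

lemma Dw2: "det3 (u 1) (u (Suc j)) w \<noteq> 0"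
proof -
  have "det3 (u 1) (u (Suc j)) w = r * det3 (u 1) (u (Suc j)) (u j)" unfolding wE by (simp add: det3_lin)
  moreover have "det3 (u 1) (u (Suc j)) (u j) \<noteq> 0" by (rule nondeg) (use j2 jn in auto)
  ultimately show ?thesis using r by simp
qed


lemma N1:
  assumes e: "e < n" "e \<noteq> 0" "e \<noteq> j" "e \<noteq> j - 1" "e \<noteq> n - 1"
  shows "sph_arc (u 0) (u j) \<inter> edge n u e = {}"
proof (rule ccontr)
  let ?f = "nx n e"
  have f: "?f < n" "?f \<noteq> 0" "?f \<noteq> j" "?f \<noteq> e" unfolding nx_def using e j2 jn by auto
  assume "sph_arc (u 0) (u j) \<inter> edge n u e \<noteq> {}"
  then obtain x where x: "x \<in> sph_arc (u 0) (u j)" "x \<in> sph_arc (u e) (u ?f)" using edge_nx[OF e(1)] by blast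
  have d1: "det3 (u 0) (u j) (u 1) \<noteq> 0" by (rule nondeg) (use j2 jn in auto)
  have d2: "det3 (u e) (u ?f) (u 0) \<noteq> 0" by (rule nondeg) (use e f in auto)
  have AB: "cone2 (u 0) (u j) x" and xnz: "x \<noteq> 0" using arc_cone[OF d1 x(1)] by auto
  have cd: "cone2 (u e) (u ?f) x" using arc_cone[OF d2 x(2)] by auto
  have nzA: "det3 (u e) (u ?f) (u 0) \<noteq> 0" by (rule d2)
  have nzB: "det3 (u e) (u ?f) (u j) \<noteq> 0" by (rule nondeg) (use e f jn j2 in auto)
  have nzc: "det3 (u 0) (u j) (u e) \<noteq> 0" by (rule nondeg) (use e f jn j2 in auto)
  have nzd: "det3 (u 0) (u j) (u ?f) \<noteq> 0" by (rule nondeg) (use e f jn j2 in auto)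
  have notc: "\<not> (\<exists>\<alpha> \<beta> \<gamma>. \<alpha> \<ge> 0 \<and> \<beta> \<ge> 0 \<and> \<gamma> \<ge> 0 \<and> u e = \<alpha> *\<^sub>R u 0 + \<beta> *\<^sub>R u j + \<gamma> *\<^sub>R w)"
    using T1[of e] e tri_mem[of e] by blast
  have notd: "\<not> (\<exists>\<alpha> \<beta> \<gamma>. \<alpha> \<ge> 0 \<and> \<beta> \<ge> 0 \<and> \<gamma> \<ge> 0 \<and> u ?f = \<alpha> *\<^sub>R u 0 + \<beta> *\<^sub>R u j + \<gamma> *\<^sub>R w)"
    using T1[of ?f] f tri_mem[of ?f] by blast
  obtain y where y: "cone2 (u e) (u ?f) y" and
    alt: "(\<exists>a g. a \<ge> 0 \<and> g > 0 \<and> y = a *\<^sub>R u 0 + g *\<^sub>R w) \<or> (\<exists>b g. b \<ge> 0 \<and> g > 0 \<and> y = b *\<^sub>R u j + g *\<^sub>R w)"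
    using tri_cross[OF Dw1 cd AB xnz nzA nzB nzc nzd notc notd] by blast
  from alt show False
  proof (elim disjE exE conjE)
    fix a g :: real assume ag: "a \<ge> 0" "g > 0" "y = a *\<^sub>R u 0 + g *\<^sub>R w"
    have y2: "y = (a + g * p) *\<^sub>R u 0 + (g * q) *\<^sub>R u 1" unfolding ag(3) wB by (simp add: algebra_simps)
    have pos: "a + g * p > 0" "g * q > 0" using ag p q by (auto intro: add_nonneg_pos)
    show False
    proof (rule no_meet[where ei=e and ej=0 and y=y and ka="a + g * p" and x=0 and kb="g * q" and z=1])
      show "cone2 (u e) (u (nx n e)) y" by (rule y)
      show "cone2 (u 0) (u (nx n 0)) y" unfolding nx0 using pos y2 by (intro cone2I) auto
    qed (use e pos y2 n4 in auto)
  next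
    fix b g :: real assume bg: "b \<ge> 0" "g > 0" "y = b *\<^sub>R u j + g *\<^sub>R w"
    have y2: "y = (b + g * r) *\<^sub>R u j + (g * t) *\<^sub>R u (Suc j)" unfolding bg(3) wE by (simp add: algebra_simps)
    have pos: "b + g * r > 0" "g * t > 0" using bg r t by (auto intro: add_nonneg_pos)
    show False
    proof (rule no_meet[where ei=e and ej=j and y=y and ka="b + g * r" and x=j and kb="g * t" and z="Suc j"])
      show "cone2 (u e) (u (nx n e)) y" by (rule y)
      show "cone2 (u j) (u (nx n j)) y" unfolding nxj using pos y2 by (intro cone2I) auto
    qed (use e pos y2 jn in auto)
  qed
qed

lemma N2:
  assumes e: "e < n" "e \<noteq> 0" "e \<noteq> 1" "e \<noteq> j" "e \<noteq> Suc j"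
  shows "sph_arc (u 1) (u (Suc j)) \<inter> edge n u e = {}"
proof (rule ccontr)
  let ?f = "nx n e"
  have f: "?f < n" "?f \<noteq> 1" "?f \<noteq> Suc j" "?f \<noteq> e" unfolding nx_def using e j2 jn by auto
  assume "sph_arc (u 1) (u (Suc j)) \<inter> edge n u e \<noteq> {}"
  then obtain x where x: "x \<in> sph_arc (u 1) (u (Suc j))" "x \<in> sph_arc (u e) (u ?f)" using edge_nx[OF e(1)] by blast
  have d1: "det3 (u 1) (u (Suc j)) (u 0) \<noteq> 0" by (rule nondeg) (use j2 jn in auto)
  have d2: "det3 (u e) (u ?f) (u 1) \<noteq> 0" by (rule nondeg) (use e f n4 in auto)
  have AB: "cone2 (u 1) (u (Suc j)) x" and xnz: "x \<noteq> 0" using arc_cone[OF d1 x(1)] by auto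
  have cd: "cone2 (u e) (u ?f) x" using arc_cone[OF d2 x(2)] by auto
  have nzA: "det3 (u e) (u ?f) (u 1) \<noteq> 0" by (rule d2)
  have nzB: "det3 (u e) (u ?f) (u (Suc j)) \<noteq> 0" by (rule nondeg) (use e f jn j2 in auto)
  have nzc: "det3 (u 1) (u (Suc j)) (u e) \<noteq> 0" by (rule nondeg) (use e f jn n4 j2 in auto)
  have nzd: "det3 (u 1) (u (Suc j)) (u ?f) \<noteq> 0" by (rule nondeg) (use e f jn n4 j2 in auto)
  have notc: "\<not> (\<exists>\<alpha> \<beta> \<gamma>. \<alpha> \<ge> 0 \<and> \<beta> \<ge> 0 \<and> \<gamma> \<ge> 0 \<and> u e = \<alpha> *\<^sub>R u 1 + \<beta> *\<^sub>R u (Suc j) + \<gamma> *\<^sub>R w)"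
    using T2[of e] e tri_mem[of e] by blast
  have notd: "\<not> (\<exists>\<alpha> \<beta> \<gamma>. \<alpha> \<ge> 0 \<and> \<beta> \<ge> 0 \<and> \<gamma> \<ge> 0 \<and> u ?f = \<alpha> *\<^sub>R u 1 + \<beta> *\<^sub>R u (Suc j) + \<gamma> *\<^sub>R w)"
    using T2[of ?f] f tri_mem[of ?f] by blast
  obtain y where y: "cone2 (u e) (u ?f) y" and
    alt: "(\<exists>a g. a \<ge> 0 \<and> g > 0 \<and> y = a *\<^sub>R u 1 + g *\<^sub>R w) \<or> (\<exists>b g. b \<ge> 0 \<and> g > 0 \<and> y = b *\<^sub>R u (Suc j) + g *\<^sub>R w)"
    using tri_cross[OF Dw2 cd AB xnz nzA nzB nzc nzd notc notd] by blast
  from alt show False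
  proof (elim disjE exE conjE)
    fix a g :: real assume ag: "a \<ge> 0" "g > 0" "y = a *\<^sub>R u 1 + g *\<^sub>R w"
    have y2: "y = (g * p) *\<^sub>R u 0 + (a + g * q) *\<^sub>R u 1" unfolding ag(3) wB by (simp add: algebra_simps)
    have pos: "g * p > 0" "a + g * q > 0" using ag p q by (auto intro: add_nonneg_pos)
    show False
    proof (rule no_meet[where ei=e and ej=0 and y=y and ka="g * p" and x=0 and kb="a + g * q" and z=1])
      show "cone2 (u e) (u (nx n e)) y" by (rule y)
      show "cone2 (u 0) (u (nx n 0)) y" unfolding nx0 using pos y2 by (intro cone2I) auto
    qed (use e pos y2 n4 in auto)
  next
    fix b g :: real assume bg: "b \<ge> 0" "g > 0" "y = b *\<^sub>R u (Suc j) + g *\<^sub>R w"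
    have y2: "y = (g * r) *\<^sub>R u j + (b + g * t) *\<^sub>R u (Suc j)" unfolding bg(3) wE by (simp add: algebra_simps)
    have pos: "g * r > 0" "b + g * t > 0" using bg r t by (auto intro: add_nonneg_pos)
    show False
    proof (rule no_meet[where ei=e and ej=j and y=y and ka="g * r" and x=j and kb="b + g * t" and z="Suc j"])
      show "cone2 (u e) (u (nx n e)) y" by (rule y)
      show "cone2 (u j) (u (nx n j)) y" unfolding nxj using pos y2 by (intro cone2I) auto
    qed (use e pos y2 jn in auto)
  qed
qed

end


context L2 begin

lemma g_lt: "k < n \<Longrightarrow> g k < n" unfolding g_def using jn by auto

lemma P_disjoint:
  assumes kl: "k < l" "l < n" and na: "\<not> adjacent_edges n k l"
  shows "edge n P k \<inter> edge n P l = {}"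
proof -
  have kn: "k < n" using kl by simp
  have na': "k \<noteq> l" "nx n k \<noteq> l" "nx n l \<noteq> k" using na adj_iff[OF kn kl(2)] by auto
  consider "k = 0 \<and> l = j" | "k = 0 \<and> l \<noteq> j" | "k \<noteq> 0 \<and> k \<noteq> j \<and> l = j" | "k = j" | "k \<noteq> 0 \<and> k \<noteq> j \<and> l \<noteq> j"
    by blast
  then show ?thesis
  proof cases
    case 1 then show ?thesis using N12 edgeP0 edgePj by simp
  next
    case 2
    have l: "l \<noteq> 1" "l \<noteq> n - 1" using na' 2 nx0 unfolding nx_def by (auto split: if_splits)
    have "sph_arc (u 0) (u j) \<inter> edge n u (g l) = {}"
      by (rule N1) (use kl 2 l j2 jn in \<open>auto simp: g_def\<close>)
    then show ?thesis using 2 edgeP0 edgeP_old[of l] kl by simp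
  next
    case 3
    have k: "k \<noteq> j - 1" using na' 3 kl jn unfolding nx_def by (auto split: if_splits)
    have "sph_arc (u 1) (u (Suc j)) \<inter> edge n u (g k) = {}"
      by (rule N2) (use kl 3 k j2 jn in \<open>auto simp: g_def\<close>)
    then show ?thesis using 3 edgePj edgeP_old[of k] kl by auto
  next
    case 4
    have l: "l \<noteq> Suc j" using na' 4 nxj by auto
    have "sph_arc (u 1) (u (Suc j)) \<inter> edge n u (g l) = {}"
      by (rule N2) (use kl 4 l j2 jn in \<open>auto simp: g_def\<close>)
    then show ?thesis using 4 edgePj edgeP_old[of l] kl j2 by auto
  next
    case 5
    have l0: "l \<noteq> 0" using kl by simp
    have e: "edge n P k = edge n u (g k)" "edge n P l = edge n u (g l)"
      using edgeP_old 5 kl l0 by auto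
    have gn: "g k < n" "g l < n" using g_lt kn kl by auto
    have g0: "g k \<noteq> 0" "g k \<noteq> j" "g l \<noteq> 0" "g l \<noteq> j" using 5 kl l0 unfolding g_def by auto
    have "\<not> adjacent_edges n (g k) (g l)"
      unfolding adj_iff[OF gn] using na' kl 5 j2 jn unfolding g_def nx_def by (auto split: if_splits)
    then show ?thesis using only[OF gn] g0 e by blast
  qed
qed

lemma selfP: "num_self_intersections n P = 0"
proof -
  have "self_intersections n P = {}"
    unfolding self_intersections_def using P_disjoint by auto
  then show ?thesis unfolding num_self_intersections_def by simp
qed

end


definition Sd :: "nat \<Rightarrow> (nat \<Rightarrow> real^3) \<Rightarrow> nat \<Rightarrow> real" where
  "Sd n f k = det3 (vtx n f (k + n - 1)) (vtx n f k) (vtx n f (Suc k))"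

lemma infl_Sd: "0 < n \<Longrightarrow> is_inflection n f k \<longleftrightarrow> Sd n f k * Sd n f (Suc k) < 0"
proof -
  assume n: "0 < n"
  have "vtx n f (Suc k + n - 1) = vtx n f k" unfolding vtx_def using n by simp
  then show ?thesis unfolding is_inflection_def Sd_def by (simp add: numeral_2_eq_2)
qed

lemma Sd_lt: "k < n \<Longrightarrow> Sd n f k = det3 (f (if k = 0 then n - 1 else k - 1)) (f k) (f (nx n k))"
proof -
  assume k: "k < n"
  have a: "(k + n - 1) mod n = (if k = 0 then n - 1 else k - 1)"
  proof (cases "k = 0")
    case True then show ?thesis using k by simp
  next
    case False
    then have "k + n - 1 = (k - 1) + n" by simp
    then have "(k + n - 1) mod n = ((k - 1) + n) mod n" by (simp only:)
    also have "\<dots> = k - 1" using k by simp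
    finally show ?thesis using False by simp
  qed
  show ?thesis unfolding Sd_def vtx_def a using k Suc_mod_nx[OF k] by simp
qed

lemma Sd_n: "1 < n \<Longrightarrow> Sd n f n = Sd n f 0"
proof -
  assume n: "1 < n"
  have s: "Suc n mod n = Suc 0" using n by (simp add: mod_Suc)
  have "(n + n - 1) mod n = (0 + n - 1) mod n"
  proof -
    have "n + n - 1 = (n - 1) + n" using n by simp
    then show ?thesis by simp
  qed
  then show ?thesis unfolding Sd_def vtx_def using s n by simp
qed

context L begin

lemma P_n1: "P (n - 1) = u (n - 1)" using P_val[of "n-1"] jn by auto

lemma T0: "Sd n P 0 = det3 (u (n-1)) (u 0) (u j)"
  using Sd_lt[of 0 n P] n4 P_n1 P_val[of 0] P_val[of 1] nx0 j2 by simp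

lemma TP1: "Sd n P 1 = det3 (u 0) (u j) (u (j - 1))"
proof -
  have "nx n 1 = 2" using nx_Suc[of 1] n4 by simp
  then show ?thesis using Sd_lt[of 1 n P] n4 P_val[of 0] P_val[of 1] P_val[of 2] j2 jn by (simp add: numeral_2_eq_2)
qed

lemma Tmid: assumes "2 \<le> k" "k + 1 \<le> j" shows "Sd n P k = - Sd n u (j + 1 - k)"
proof -
  have kn: "k < n" "j + 1 - k < n" using assms jn by auto
  have p1: "P (k - 1) = u (j + 2 - k)" using P_val[of "k - 1"] assms jn by auto
  have p2: "P k = u (j + 1 - k)" using P_val[of k] assms jn by auto
  have p3: "P (nx n k) = u (j - k)" using P_val[of "Suc k"] nx_Suc[of k] assms jn by auto
  have e1: "Sd n P k = det3 (u (j + 2 - k)) (u (j + 1 - k)) (u (j - k))"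
    using Sd_lt[OF kn(1), of P] p1 p2 p3 assms by simp
  have q1: "nx n (j + 1 - k) = j + 2 - k" using nx_Suc[of "j + 1 - k"] assms jn by auto
  have q2: "j + 1 - k - 1 = j - k" by simp
  have e2: "Sd n u (j + 1 - k) = det3 (u (j - k)) (u (j + 1 - k)) (u (j + 2 - k))"
    using Sd_lt[OF kn(2), of u] assms unfolding q1 q2 by simp
  show ?thesis unfolding e1 e2 by (simp add: det3_expand algebra_simps)
qed

lemma Tj: "Sd n P j = det3 (u 2) (u 1) (u (Suc j))"
proof -
  have p1: "P (j - 1) = u 2" using P_val[of "j - 1"] j2 jn by auto
  have p2: "P j = u 1" using P_val[of j] j2 jn by auto
  have p3: "P (nx n j) = u (Suc j)" using P_val[of "Suc j"] nxj jn by auto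
  show ?thesis using Sd_lt[of j n P] jn j2 p1 p2 p3 by simp
qed

lemma Tj1: "Sd n P (Suc j) = det3 (u 1) (u (Suc j)) (u (nx n (Suc j)))"
proof -
  have "P (nx n (Suc j)) = u (nx n (Suc j))"
    using P_val[of "nx n (Suc j)"] nx_lt[of "Suc j"] jn unfolding nx_def by auto
  moreover have "P j = u 1" using P_val[of j] j2 jn by auto
  moreover have "P (Suc j) = u (Suc j)" using P_val[of "Suc j"] jn by auto
  ultimately show ?thesis using Sd_lt[of "Suc j" n P] jn j2 by simp
qed

lemma Thigh: assumes "j + 2 \<le> k" "k < n" shows "Sd n P k = Sd n u k"
proof -
  have "P (nx n k) = u (nx n k)"
    using P_val[of "nx n k"] nx_lt[of k] assms unfolding nx_def by auto
  moreover have "P (k - 1) = u (k - 1)" using P_val[of "k - 1"] assms by auto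
  moreover have "P k = u k" using P_val[of k] assms by auto
  ultimately show ?thesis using Sd_lt[of k n P] Sd_lt[of k n u] assms by simp
qed

lemma Tn: "Sd n P n = Sd n P 0" using Sd_n n4 by simp
lemma sn: "Sd n u n = Sd n u 0" using Sd_n n4 by simp

lemma s_nz: "k < n \<Longrightarrow> Sd n u k \<noteq> 0"
proof -
  assume k: "k < n"
  let ?a = "if k = 0 then n - 1 else k - 1"
  have "?a < n" "?a \<noteq> k" "k \<noteq> nx n k" "?a \<noteq> nx n k" "nx n k < n" using k n4 unfolding nx_def by auto
  then show ?thesis using Sd_lt[OF k, of u] nondeg k by simp
qed

end


lemma triN: fixes x y z :: bool shows "(of_bool (x \<noteq> z)::nat) \<le> of_bool (x \<noteq> y) + of_bool (y \<noteq> z)"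
  by (cases x; cases y; cases z) simp_all
lemma triE: fixes x y z :: bool shows "(of_bool (x = z)::nat) \<le> of_bool (x = y) + of_bool (y \<noteq> z)"
  by (cases x; cases y; cases z) simp_all

lemma coreA:
  fixes S0 S1 Sj Sj1 A B C D :: bool
  assumes "S0 \<longrightarrow> A" "Sj \<or> B" "S1 \<or> C" "Sj1 \<longrightarrow> D"
  shows "of_bool (S0 \<noteq> A) + of_bool (A \<noteq> B) + of_bool (B = Sj) + of_bool (C = S1) + of_bool (C \<noteq> D) + of_bool (D \<noteq> Sj1)
    \<le> of_bool (S0 \<noteq> S1) + of_bool (Sj \<noteq> Sj1) + (2::nat)"
  using assms by (cases S0; cases S1; cases Sj; cases Sj1; cases A; cases B; cases C; cases D) simp_all

lemma coreB:
  fixes S0 S1 S2 S3 A B C D :: bool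
  assumes "S0 \<longrightarrow> A" "S2 \<or> B" "S1 \<or> C" "S3 \<longrightarrow> D"
  shows "of_bool (S0 \<noteq> A) + of_bool (A \<noteq> B) + of_bool (B \<noteq> C) + of_bool (C \<noteq> D) + of_bool (D \<noteq> S3)
    \<le> of_bool (S0 \<noteq> S1) + of_bool (S1 \<noteq> S2) + of_bool (S2 \<noteq> S3) + (2::nat)"
  using assms by (cases S0; cases S1; cases S2; cases S3; cases A; cases B; cases C; cases D) simp_all

lemma coreC:
  fixes S0 S1 Sj Sj1 A B C D :: bool
  assumes "S0 \<longrightarrow> A" "Sj \<or> B" "S1 \<or> C" "Sj1 \<longrightarrow> D"
  shows "of_bool (D \<noteq> A) + of_bool (A \<noteq> B) + of_bool (B = Sj) + of_bool (C = S1) + of_bool (C \<noteq> D)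
    \<le> of_bool (Sj1 \<noteq> S0) + of_bool (S0 \<noteq> S1) + of_bool (Sj \<noteq> Sj1) + (2::nat)"
  using assms by (cases S0; cases S1; cases Sj; cases Sj1; cases A; cases B; cases C; cases D) simp_all

lemma coreD:
  fixes S0 S1 S2 S3 A B C D :: bool
  assumes "S0 \<longrightarrow> A" "S2 \<or> B" "S1 \<or> C" "S3 \<longrightarrow> D"
  shows "of_bool (D \<noteq> A) + of_bool (A \<noteq> B) + of_bool (B \<noteq> C) + of_bool (C \<noteq> D)
    \<le> of_bool (S3 \<noteq> S0) + of_bool (S0 \<noteq> S1) + of_bool (S1 \<noteq> S2) + of_bool (S2 \<noteq> S3) + (2::nat)"
  using assms by (cases S0; cases S1; cases S2; cases S3; cases A; cases B; cases C; cases D) simp_all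


lemma fullA:
  fixes Sn1 S0 S1 S2 Sjm Sj Sj1 Sj2 A B C D :: bool
  assumes h: "S0 \<longrightarrow> A" "Sj \<or> B" "S1 \<or> C" "Sj1 \<longrightarrow> D"
  shows "of_bool (Sn1 \<noteq> A) + of_bool (A \<noteq> B) + of_bool (B = Sjm) + of_bool (S2 = C) + of_bool (C \<noteq> D) + of_bool (D \<noteq> Sj2)
    \<le> of_bool (Sn1 \<noteq> S0) + of_bool (S0 \<noteq> S1) + of_bool (S1 \<noteq> S2) + of_bool (Sjm \<noteq> Sj) + of_bool (Sj \<noteq> Sj1) + of_bool (Sj1 \<noteq> Sj2) + (2::nat)"
proof -
  have c: "of_bool (S0 \<noteq> A) + of_bool (A \<noteq> B) + of_bool (B = Sj) + of_bool (C = S1) + of_bool (C \<noteq> D) + of_bool (D \<noteq> Sj1)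
    \<le> of_bool (S0 \<noteq> S1) + of_bool (Sj \<noteq> Sj1) + (2::nat)" by (rule coreA[OF h])
  have t1: "(of_bool (Sn1 \<noteq> A)::nat) \<le> of_bool (Sn1 \<noteq> S0) + of_bool (S0 \<noteq> A)" by (rule triN)
  have t2: "(of_bool (B = Sjm)::nat) \<le> of_bool (B = Sj) + of_bool (Sj \<noteq> Sjm)" by (rule triE)
  have t3: "(of_bool (C = S2)::nat) \<le> of_bool (C = S1) + of_bool (S1 \<noteq> S2)" by (rule triE)
  have t4: "(of_bool (D \<noteq> Sj2)::nat) \<le> of_bool (D \<noteq> Sj1) + of_bool (Sj1 \<noteq> Sj2)" by (rule triN)
  have s1: "(of_bool (Sj \<noteq> Sjm)::nat) = of_bool (Sjm \<noteq> Sj)" "(of_bool (S2 = C)::nat) = of_bool (C = S2)" by auto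
  show ?thesis using c t1 t2 t3 t4 s1 by linarith
qed

lemma fullB:
  fixes Sn1 S0 S1 S2 S3 S4 A B C D :: bool
  assumes h: "S0 \<longrightarrow> A" "S2 \<or> B" "S1 \<or> C" "S3 \<longrightarrow> D"
  shows "of_bool (Sn1 \<noteq> A) + of_bool (A \<noteq> B) + of_bool (B \<noteq> C) + of_bool (C \<noteq> D) + of_bool (D \<noteq> S4)
    \<le> of_bool (Sn1 \<noteq> S0) + of_bool (S0 \<noteq> S1) + of_bool (S1 \<noteq> S2) + of_bool (S2 \<noteq> S3) + of_bool (S3 \<noteq> S4) + (2::nat)"
proof -
  have c: "of_bool (S0 \<noteq> A) + of_bool (A \<noteq> B) + of_bool (B \<noteq> C) + of_bool (C \<noteq> D) + of_bool (D \<noteq> S3)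
    \<le> of_bool (S0 \<noteq> S1) + of_bool (S1 \<noteq> S2) + of_bool (S2 \<noteq> S3) + (2::nat)" by (rule coreB[OF h])
  have t1: "(of_bool (Sn1 \<noteq> A)::nat) \<le> of_bool (Sn1 \<noteq> S0) + of_bool (S0 \<noteq> A)" by (rule triN)
  have t4: "(of_bool (D \<noteq> S4)::nat) \<le> of_bool (D \<noteq> S3) + of_bool (S3 \<noteq> S4)" by (rule triN)
  show ?thesis using c t1 t4 by linarith
qed

lemma fullC:
  fixes S0 S1 S2 Sjm Sj Sj1 A B C D :: bool
  assumes h: "S0 \<longrightarrow> A" "Sj \<or> B" "S1 \<or> C" "Sj1 \<longrightarrow> D"
  shows "of_bool (D \<noteq> A) + of_bool (A \<noteq> B) + of_bool (B = Sjm) + of_bool (S2 = C) + of_bool (C \<noteq> D)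
    \<le> of_bool (Sj1 \<noteq> S0) + of_bool (S0 \<noteq> S1) + of_bool (S1 \<noteq> S2) + of_bool (Sjm \<noteq> Sj) + of_bool (Sj \<noteq> Sj1) + (2::nat)"
proof -
  have c: "of_bool (D \<noteq> A) + of_bool (A \<noteq> B) + of_bool (B = Sj) + of_bool (C = S1) + of_bool (C \<noteq> D)
    \<le> of_bool (Sj1 \<noteq> S0) + of_bool (S0 \<noteq> S1) + of_bool (Sj \<noteq> Sj1) + (2::nat)" by (rule coreC[OF h])
  have t2: "(of_bool (B = Sjm)::nat) \<le> of_bool (B = Sj) + of_bool (Sj \<noteq> Sjm)" by (rule triE)
  have t3: "(of_bool (C = S2)::nat) \<le> of_bool (C = S1) + of_bool (S1 \<noteq> S2)" by (rule triE)
  have s1: "(of_bool (Sj \<noteq> Sjm)::nat) = of_bool (Sjm \<noteq> Sj)" "(of_bool (S2 = C)::nat) = of_bool (C = S2)" by auto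
  show ?thesis using c t2 t3 s1 by linarith
qed

locale sgnl = fixes \<sigma> :: real assumes snz: "\<sigma> \<noteq> 0"
begin
definition R :: "real \<Rightarrow> bool" where "R x = ((0 < x) = (0 < \<sigma>))"
lemma cn: "x \<noteq> 0 \<Longrightarrow> y \<noteq> 0 \<Longrightarrow> (x * y < 0) = (R x \<noteq> R y)"
  unfolding R_def using snz by (cases "0 < x"; cases "0 < y"; cases "0 < \<sigma>") (auto simp: mult_less_0_iff zero_less_mult_iff)
lemma cn2: "x \<noteq> 0 \<Longrightarrow> y \<noteq> 0 \<Longrightarrow> (x * (- y) < 0) = (R x = R y)"
  unfolding R_def using snz by (cases "0 < x"; cases "0 < y"; cases "0 < \<sigma>") (auto simp: mult_less_0_iff zero_less_mult_iff)
lemma cn3: "x \<noteq> 0 \<Longrightarrow> y \<noteq> 0 \<Longrightarrow> ((- x) * y < 0) = (R x = R y)"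
  unfolding R_def using snz by (cases "0 < x"; cases "0 < y"; cases "0 < \<sigma>") (auto simp: mult_less_0_iff zero_less_mult_iff)
lemma cp: "x \<noteq> 0 \<Longrightarrow> (\<sigma> * x > 0) = R x"
  unfolding R_def using snz by (cases "0 < x"; cases "0 < \<sigma>") (auto simp: zero_less_mult_iff)
lemma cm: "x \<noteq> 0 \<Longrightarrow> (\<sigma> * x < 0) = (\<not> R x)"
  unfolding R_def using snz by (cases "0 < x"; cases "0 < \<sigma>") (auto simp: mult_less_0_iff zero_less_mult_iff)
end


lemma card_sum: "card {k. k < (n::nat) \<and> Q k} = (\<Sum>k<n. (of_bool (Q k) :: nat))"
proof -
  have "{k. k < n \<and> Q k} = {..<n} \<inter> {k. Q k}" by auto
  moreover have "(\<Sum>k<n. (of_bool (Q k)::nat)) = of_nat (card ({..<n} \<inter> {x. Q x}))"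
    by (rule sum_of_bool_eq) simp_all
  ultimately show ?thesis by simp
qed

context L2 begin

definition fQ where "fQ k = (of_bool (Sd n u k * Sd n u (Suc k) < 0) :: nat)"
definition fP where "fP k = (of_bool (Sd n P k * Sd n P (Suc k) < 0) :: nat)"

lemma IQ: "num_inflections n u = (\<Sum>k<n. fQ k)"
  unfolding num_inflections_def card_sum fQ_def using infl_Sd[of n u] n4 by simp

lemma IP: "num_inflections n P = (\<Sum>k<n. fP k)"
  unfolding num_inflections_def card_sum fP_def using infl_Sd[of n P] n4 by simp

lemma split3: "(\<Sum>k<n. F k) = sum F {2..<j-1} + sum F {j+2..<n-1} + sum F {n-1, 0, 1, j-1, j, j+1}"
proof -
  have U: "{..<n} = ({2..<j-1} \<union> {j+2..<n-1}) \<union> {n-1, 0, 1, j-1, j, j+1}" using j2 jn by auto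
  have d1: "{2..<j-1} \<inter> {j+2..<n-1} = {}" by auto
  have d2: "({2..<j-1} \<union> {j+2..<n-1}) \<inter> {n-1, 0, 1, j-1, j, j+1} = {}" using j2 jn by auto
  have "sum F (({2..<j-1} \<union> {j+2..<n-1}) \<union> {n-1, 0, 1, j-1, j, j+1}) =
      sum F ({2..<j-1} \<union> {j+2..<n-1}) + sum F {n-1, 0, 1, j-1, j, j+1}"
    by (rule sum.union_disjoint) (use d2 in auto)
  moreover have "sum F ({2..<j-1} \<union> {j+2..<n-1}) = sum F {2..<j-1} + sum F {j+2..<n-1}"
    by (rule sum.union_disjoint) (use d1 in auto)
  ultimately show ?thesis unfolding U[symmetric] by simp
qed

lemma M1: "sum fP {2..<j-1} = sum fQ {2..<j-1}"
proof (rule sum.reindex_bij_witness[where i="\<lambda>k. j - k" and j="\<lambda>k. j - k"])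
  fix a assume a: "a \<in> {2..<j-1}"
  show "j - (j - a) = a" using a by auto
  show "j - a \<in> {2..<j-1}" using a by auto
  have "Sd n P a = - Sd n u (j + 1 - a)" by (rule Tmid) (use a in auto)
  moreover have "Sd n P (Suc a) = - Sd n u (j - a)" using Tmid[of "Suc a"] a by auto
  moreover have "Suc (j - a) = j + 1 - a" using a by auto
  ultimately show "fQ (j - a) = fP a" unfolding fQ_def fP_def by (simp add: mult.commute)
next
  fix b assume b: "b \<in> {2..<j-1}"
  show "j - (j - b) = b" using b by auto
  show "j - b \<in> {2..<j-1}" using b by auto
qed

lemma M2: "sum fP {j+2..<n-1} = sum fQ {j+2..<n-1}"
proof (rule sum.cong)
  fix k assume k: "k \<in> {j+2..<n-1}"
  show "fP k = fQ k" unfolding fP_def fQ_def using Thigh[of k] Thigh[of "Suc k"] k by auto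
qed simp

end


context L2 begin

lemma nz_a: "Sd n P 0 \<noteq> 0" unfolding T0 by (rule nondeg) (use j2 jn in auto)
lemma nz_b: "Sd n P 1 \<noteq> 0" unfolding TP1 by (rule nondeg) (use j2 jn in auto)
lemma nz_c: "Sd n P j \<noteq> 0" unfolding Tj by (rule nondeg) (use j2 jn in auto)
lemma nz_d: "Sd n P (Suc j) \<noteq> 0" unfolding Tj1
  by (rule nondeg) (use j2 jn nx_lt[of "Suc j"] in \<open>auto simp: nx_def\<close>)

lemma s0v: "Sd n u 0 = det3 (u (n-1)) (u 0) (u 1)" using Sd_lt[of 0 n u] n4 nx0 by simp
lemma s1v: "Sd n u 1 = det3 (u 0) (u 1) (u 2)"
proof -
  have "nx n 1 = 2" using nx_Suc[of 1] n4 by simp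
  then show ?thesis using Sd_lt[of 1 n u] n4 by simp
qed
lemma sjv: "Sd n u j = det3 (u (j-1)) (u j) (u (Suc j))" using Sd_lt[of j n u] jn j2 nxj by simp
lemma sj1v: "Sd n u (Suc j) = det3 (u j) (u (Suc j)) (u (nx n (Suc j)))" using Sd_lt[of "Suc j" n u] jn by simp

lemma fPn1: "j + 3 \<le> n \<Longrightarrow> fP (n-1) = of_bool (Sd n u (n-1) * Sd n P 0 < 0)"
  unfolding fP_def using Thigh[of "n-1"] Tn n4 by simp
lemma fPn1': "j + 2 = n \<Longrightarrow> fP (n-1) = of_bool (Sd n P (Suc j) * Sd n P 0 < 0)"
proof -
  assume h: "j + 2 = n"
  then have "n - 1 = Suc j" "Suc (n - 1) = n" by auto
  then show ?thesis unfolding fP_def using Tn by simp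
qed
lemma fP1A: "3 \<le> j \<Longrightarrow> fP 1 = of_bool (Sd n P 1 * (- Sd n u (j-1)) < 0)"
  unfolding fP_def using Tmid[of 2] by (simp add: numeral_2_eq_2)
lemma fPjmA: "3 \<le> j \<Longrightarrow> fP (j-1) = of_bool ((- Sd n u 2) * Sd n P j < 0)"
proof -
  assume h: "3 \<le> j"
  then have "Suc (j - 1) = j" "j + 1 - (j - 1) = 2" by auto
  then show ?thesis unfolding fP_def using Tmid[of "j-1"] h by simp
qed
lemma fPj1A: "j + 3 \<le> n \<Longrightarrow> fP (Suc j) = of_bool (Sd n P (Suc j) * Sd n u (Suc (Suc j)) < 0)"
  unfolding fP_def using Thigh[of "Suc (Suc j)"] by simp
lemma fQn1: "fQ (n-1) = of_bool (Sd n u (n-1) * Sd n u 0 < 0)"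
proof -
  have "Suc (n - 1) = n" using n4 by simp
  then show ?thesis unfolding fQ_def using sn by simp
qed



lemma Spart: "sum fP {n-1, 0, 1, j-1, j, j+1} \<le> sum fQ {n-1, 0, 1, j-1, j, j+1} + 2"
proof -
  interpret sgnl "det3 (u 0) (u 1) (u j)" by unfold_locales (rule sig_nz)
  have nzs: "\<And>k. k < n \<Longrightarrow> Sd n u k \<noteq> 0" by (rule s_nz)
  have E1: "R (Sd n u 0) \<longrightarrow> R (Sd n P 0)"
    using e1 cp[OF nzs[of 0]] cm[OF nz_a] n4 unfolding s0v[symmetric] T0[symmetric] by auto
  have E2: "R (Sd n u j) \<or> R (Sd n P 1)"
    using e2 cm[OF nzs[of j]] cm[OF nz_b] jn unfolding sjv[symmetric] TP1[symmetric] by auto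
  have E3: "R (Sd n u 1) \<or> R (Sd n P j)"
    using e3 cm[OF nzs[of 1]] cm[OF nz_c] n4 unfolding s1v[symmetric] Tj[symmetric] by auto
  have E4: "R (Sd n u (Suc j)) \<longrightarrow> R (Sd n P (Suc j))"
    using e4 cp[OF nzs[of "Suc j"]] cm[OF nz_d] jn unfolding sj1v[symmetric] Tj1[symmetric] by auto
  have n0: "Sd n u (n-1) \<noteq> 0" "Sd n u 0 \<noteq> 0" "Sd n u 1 \<noteq> 0" "Sd n u 2 \<noteq> 0" "Sd n u 3 \<noteq> 0"
    "Sd n u (j-1) \<noteq> 0" "Sd n u j \<noteq> 0" "Sd n u (Suc j) \<noteq> 0" using nzs n4 jn by auto
  have fP0: "fP 0 = of_bool (R (Sd n P 0) \<noteq> R (Sd n P 1))"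
    unfolding fP_def using cn[OF nz_a nz_b] by simp
  have fPj: "fP j = of_bool (R (Sd n P j) \<noteq> R (Sd n P (Suc j)))"
    unfolding fP_def using cn[OF nz_c nz_d] by simp
  have fQ0: "fQ 0 = of_bool (R (Sd n u 0) \<noteq> R (Sd n u 1))"
    unfolding fQ_def using cn[OF n0(2) n0(3)] by simp
  have fQ1: "fQ 1 = of_bool (R (Sd n u 1) \<noteq> R (Sd n u 2))"
    unfolding fQ_def using cn[OF n0(3) n0(4)] by (simp add: numeral_2_eq_2)
  have fQj: "fQ j = of_bool (R (Sd n u j) \<noteq> R (Sd n u (Suc j)))"
    unfolding fQ_def using cn[OF n0(7) n0(8)] by simp
  consider "3 \<le> j \<and> j + 3 \<le> n" | "j = 2 \<and> j + 3 \<le> n" | "3 \<le> j \<and> j + 2 = n" | "j = 2 \<and> j + 2 = n"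
    using j2 jn by linarith
  then show ?thesis
  proof cases
    case 1
    have n5: "Sd n u (Suc (Suc j)) \<noteq> 0" using nzs 1 by auto
    have S: "{n-1, 0, 1, j-1, j, j+1} = set [n-1, 0, 1, j-1, j, Suc j]" by simp
    have dist: "distinct [n-1, 0, 1, j-1, j, Suc j]" using 1 by auto
    have XP: "sum fP {n-1, 0, 1, j-1, j, j+1} = fP (n-1) + fP 0 + fP 1 + fP (j-1) + fP j + fP (Suc j)"
      unfolding S sum.distinct_set_conv_list[OF dist] by simp
    have XQ: "sum fQ {n-1, 0, 1, j-1, j, j+1} = fQ (n-1) + fQ 0 + fQ 1 + fQ (j-1) + fQ j + fQ (Suc j)"
      unfolding S sum.distinct_set_conv_list[OF dist] by simp
    have a1: "fP (n-1) = of_bool (R (Sd n u (n-1)) \<noteq> R (Sd n P 0))"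
      unfolding fPn1[OF conjunct2[OF 1]] cn[OF n0(1) nz_a] ..
    have a3: "fP 1 = of_bool (R (Sd n P 1) = R (Sd n u (j-1)))"
      unfolding fP1A[OF conjunct1[OF 1]] cn2[OF nz_b n0(6)] ..
    have a4: "fP (j-1) = of_bool (R (Sd n u 2) = R (Sd n P j))"
      unfolding fPjmA[OF conjunct1[OF 1]] cn3[OF n0(4) nz_c] ..
    have a6: "fP (Suc j) = of_bool (R (Sd n P (Suc j)) \<noteq> R (Sd n u (Suc (Suc j))))"
      unfolding fPj1A[OF conjunct2[OF 1]] cn[OF nz_d n5] ..
    have b1: "fQ (n-1) = of_bool (R (Sd n u (n-1)) \<noteq> R (Sd n u 0))"
      unfolding fQn1 cn[OF n0(1) n0(2)] ..
    have b4: "fQ (j-1) = of_bool (R (Sd n u (j-1)) \<noteq> R (Sd n u j))"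
    proof -
      have "Suc (j - 1) = j" using 1 by simp
      then show ?thesis unfolding fQ_def using cn[OF n0(6) n0(7)] by simp
    qed
    have b6: "fQ (Suc j) = of_bool (R (Sd n u (Suc j)) \<noteq> R (Sd n u (Suc (Suc j))))"
      unfolding fQ_def using cn[OF n0(8) n5] by simp
    show ?thesis unfolding XP XQ a1 fP0 a3 a4 fPj a6 b1 fQ0 fQ1 b4 fQj b6
      by (rule fullA[OF E1 E2 E3 E4])
  next
    case 2
    then have jv: "j = 2" by simp
    have n5: "Sd n u 4 \<noteq> 0" using nzs 2 by auto
    have S: "{n-1, 0, 1, j-1, j, j+1} = set [n-1, 0, 1, 2, 3]" using jv by auto
    have dist: "distinct [n-1, 0, 1, 2, 3::nat]" using 2 by auto
    have XP: "sum fP {n-1, 0, 1, j-1, j, j+1} = fP (n-1) + fP 0 + fP 1 + fP 2 + fP 3"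
      unfolding S sum.distinct_set_conv_list[OF dist] by simp
    have XQ: "sum fQ {n-1, 0, 1, j-1, j, j+1} = fQ (n-1) + fQ 0 + fQ 1 + fQ 2 + fQ 3"
      unfolding S sum.distinct_set_conv_list[OF dist] by simp
    have a1: "fP (n-1) = of_bool (R (Sd n u (n-1)) \<noteq> R (Sd n P 0))"
      unfolding fPn1[OF conjunct2[OF 2]] cn[OF n0(1) nz_a] ..
    have a3: "fP 1 = of_bool (R (Sd n P 1) \<noteq> R (Sd n P 2))"
      unfolding fP_def using cn[OF nz_b nz_c] jv by (simp add: numeral_2_eq_2)
    have a4: "fP 2 = of_bool (R (Sd n P 2) \<noteq> R (Sd n P 3))"
      using fPj jv by (simp add: eval_nat_numeral)
    have a6: "fP 3 = of_bool (R (Sd n P 3) \<noteq> R (Sd n u 4))"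
      using fPj1A[OF conjunct2[OF 2]] cn[OF nz_d n5] jv by (simp add: eval_nat_numeral)
    have b1: "fQ (n-1) = of_bool (R (Sd n u (n-1)) \<noteq> R (Sd n u 0))"
      unfolding fQn1 cn[OF n0(1) n0(2)] ..
    have b4: "fQ 2 = of_bool (R (Sd n u 2) \<noteq> R (Sd n u 3))"
      using fQj jv by (simp add: eval_nat_numeral)
    have b6: "fQ 3 = of_bool (R (Sd n u 3) \<noteq> R (Sd n u 4))"
      unfolding fQ_def using cn[OF n0(5) n5] by (simp add: eval_nat_numeral)
    have E2': "R (Sd n u 2) \<or> R (Sd n P 1)" using E2 jv by simp
    have E3': "R (Sd n u 1) \<or> R (Sd n P 2)" using E3 jv by simp
    have E4': "R (Sd n u 3) \<longrightarrow> R (Sd n P 3)" using E4 jv by (simp add: eval_nat_numeral)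
    show ?thesis unfolding XP XQ a1 fP0 a3 a4 a6 b1 fQ0 fQ1 b4 b6
      by (rule fullB[OF E1 E2' E3' E4'])
  next
    case 3
    have S: "{n-1, 0, 1, j-1, j, j+1} = set [Suc j, 0, 1, j-1, j]" using 3 by auto
    have dist: "distinct [Suc j, 0, 1, j-1, j]" using 3 by auto
    have n1: "n - 1 = Suc j" using 3 by auto
    have XP: "sum fP {n-1, 0, 1, j-1, j, j+1} = fP (Suc j) + fP 0 + fP 1 + fP (j-1) + fP j"
      unfolding S sum.distinct_set_conv_list[OF dist] by simp
    have XQ: "sum fQ {n-1, 0, 1, j-1, j, j+1} = fQ (Suc j) + fQ 0 + fQ 1 + fQ (j-1) + fQ j"
      unfolding S sum.distinct_set_conv_list[OF dist] by simp
    have a1: "fP (Suc j) = of_bool (R (Sd n P (Suc j)) \<noteq> R (Sd n P 0))"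
      using fPn1'[OF conjunct2[OF 3]] cn[OF nz_d nz_a] n1 by simp
    have a3: "fP 1 = of_bool (R (Sd n P 1) = R (Sd n u (j-1)))"
      unfolding fP1A[OF conjunct1[OF 3]] cn2[OF nz_b n0(6)] ..
    have a4: "fP (j-1) = of_bool (R (Sd n u 2) = R (Sd n P j))"
      unfolding fPjmA[OF conjunct1[OF 3]] cn3[OF n0(4) nz_c] ..
    have b1: "fQ (Suc j) = of_bool (R (Sd n u (Suc j)) \<noteq> R (Sd n u 0))"
      using fQn1 cn[OF n0(8) n0(2)] n1 by simp
    have b4: "fQ (j-1) = of_bool (R (Sd n u (j-1)) \<noteq> R (Sd n u j))"
    proof -
      have "Suc (j - 1) = j" using 3 by simp
      then show ?thesis unfolding fQ_def using cn[OF n0(6) n0(7)] by simp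
    qed
    show ?thesis unfolding XP XQ a1 fP0 a3 a4 fPj b1 fQ0 fQ1 b4 fQj
      by (rule fullC[OF E1 E2 E3 E4])
  next
    case 4
    then have jv: "j = 2" and nv: "n = 4" by auto
    have S: "{n-1, 0, 1, j-1, j, j+1} = set [3, 0, 1, 2]" using jv nv by auto
    have dist: "distinct [3, 0, 1, 2::nat]" by simp
    have XP: "sum fP {n-1, 0, 1, j-1, j, j+1} = fP 3 + fP 0 + fP 1 + fP 2"
      unfolding S sum.distinct_set_conv_list[OF dist] by simp
    have XQ: "sum fQ {n-1, 0, 1, j-1, j, j+1} = fQ 3 + fQ 0 + fQ 1 + fQ 2"
      unfolding S sum.distinct_set_conv_list[OF dist] by simp
    have a1: "fP 3 = of_bool (R (Sd n P 3) \<noteq> R (Sd n P 0))"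
      using fPn1'[OF conjunct2[OF 4]] cn[OF nz_d nz_a] jv nv by (simp add: eval_nat_numeral)
    have a3: "fP 1 = of_bool (R (Sd n P 1) \<noteq> R (Sd n P 2))"
      unfolding fP_def using cn[OF nz_b nz_c] jv by (simp add: numeral_2_eq_2)
    have a4: "fP 2 = of_bool (R (Sd n P 2) \<noteq> R (Sd n P 3))"
      using fPj jv by (simp add: eval_nat_numeral)
    have b1: "fQ 3 = of_bool (R (Sd n u 3) \<noteq> R (Sd n u 0))"
      using fQn1 cn[OF n0(5) n0(2)] nv by (simp add: eval_nat_numeral)
    have b4: "fQ 2 = of_bool (R (Sd n u 2) \<noteq> R (Sd n u 3))"
      using fQj jv by (simp add: eval_nat_numeral)
    have E2': "R (Sd n u 2) \<or> R (Sd n P 1)" using E2 jv by simp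
    have E3': "R (Sd n u 1) \<or> R (Sd n P 2)" using E3 jv by simp
    have E4': "R (Sd n u 3) \<longrightarrow> R (Sd n P 3)" using E4 jv by (simp add: eval_nat_numeral)
    show ?thesis unfolding XP XQ a1 fP0 a3 a4 b1 fQ0 fQ1 b4
      by (rule coreD[OF E1 E2' E3' E4'])
  qed
qed


lemma infl_bound: "num_inflections n P \<le> num_inflections n u + 2"
proof -
  have "num_inflections n P = sum fP {2..<j-1} + sum fP {j+2..<n-1} + sum fP {n-1, 0, 1, j-1, j, j+1}"
    unfolding IP by (rule split3)
  moreover have "num_inflections n u = sum fQ {2..<j-1} + sum fQ {j+2..<n-1} + sum fQ {n-1, 0, 1, j-1, j, j+1}"
    unfolding IQ by (rule split3)
  ultimately show ?thesis using M1 M2 Spart by linarith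
qed

end


lemma rot_mod: "(k::nat) < n \<Longrightarrow> i < n \<Longrightarrow> (k + i) mod n = (if k + i < n then k + i else k + i - n)"
proof -
  assume a: "k < n" "i < n"
  show ?thesis
  proof (cases "k + i < n")
    case True then show ?thesis by simp
  next
    case False
    then have "k + i = (k + i - n) + n" by simp
    then have "(k + i) mod n = (k + i - n) mod n" by (metis mod_add_self2)
    also have "\<dots> = k + i - n" using a False by simp
    finally show ?thesis using False by simp
  qed
qed

lemma vtx_rot: "vtx n (\<lambda>k. u ((k + i) mod n)) k = vtx n u (k + i)"
  unfolding vtx_def by (simp add: mod_add_left_eq)

lemma vtx_mod: "vtx n u (k mod n) = vtx n u k"
  unfolding vtx_def by simp

lemma vtx_eq: "a mod n = b mod n \<Longrightarrow> vtx n u a = vtx n u b"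
  unfolding vtx_def by simp

lemma edge_rot: "edge n (\<lambda>k. u ((k + i) mod n)) k = edge n u ((k + i) mod n)"
proof -
  have "vtx n u (Suc (k + i)) = vtx n u (Suc ((k + i) mod n))"
    by (rule vtx_eq) (simp add: mod_Suc_eq)
  then show ?thesis unfolding edge_def vtx_rot by (simp add: vtx_mod)
qed


lemma rot_inv1: "(k::nat) < n \<Longrightarrow> i < n \<Longrightarrow> ((k + i) mod n + n - i) mod n = k"
proof -
  assume a: "k < n" "i < n"
  show ?thesis
  proof (cases "k + i < n")
    case True
    then have "(k + i) mod n = k + i" by (rule mod_less)
    then have "(k + i) mod n + n - i = k + n" by simp
    then show ?thesis using a by simp
  next
    case False
    have "(k + i) mod n = k + i - n" using rot_mod[OF a] False by simp
    then have "(k + i) mod n + n - i = k" using False a by simp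
    then show ?thesis using a by simp
  qed
qed

lemma rot_inv2: "(m::nat) < n \<Longrightarrow> i < n \<Longrightarrow> ((m + n - i) mod n + i) mod n = m"
proof -
  assume a: "m < n" "i < n"
  show ?thesis
  proof (cases "m < i")
    case True
    have lt: "m + n - i < n" using True a by simp
    have "(m + n - i) mod n = m + n - i" using lt by (rule mod_less)
    then have "(m + n - i) mod n + i = m + n" using True a by simp
    then show ?thesis using a by simp
  next
    case False
    have e: "m + n - i = (m - i) + n" using False by simp
    have lt: "m - i < n" using a by simp
    have "(m + n - i) mod n = (m - i) mod n" unfolding e by (rule mod_add_self2)
    also have "\<dots> = m - i" using lt by (rule mod_less)
    finally have "(m + n - i) mod n + i = m" using False by simp
    then show ?thesis using a by simp
  qed
qed

lemma rot_inj: assumes "(a::nat) < n" "b < n" "i < n" "(a + i) mod n = (b + i) mod n" shows "a = b"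
proof -
  have "a = ((a + i) mod n + n - i) mod n" using rot_inv1[OF assms(1,3)] by simp
  also have "\<dots> = ((b + i) mod n + n - i) mod n" using assms(4) by simp
  also have "\<dots> = b" using rot_inv1[OF assms(2,3)] by simp
  finally show ?thesis .
qed

lemma infl_rot:
  assumes n: "0 < n"
  shows "is_inflection n (\<lambda>k. u ((k + i) mod n)) k = is_inflection n u ((k + i) mod n)"
proof -
  have e1: "vtx n u (k + n - 1 + i) = vtx n u ((k + i) mod n + n - 1)"
  proof (rule vtx_eq)
    have q1: "k + n - 1 + i = (k + i) + (n - 1)" using n by simp
    have q2: "(k + i) mod n + n - 1 = (k + i) mod n + (n - 1)" using n by simp
    show "(k + n - 1 + i) mod n = ((k + i) mod n + n - 1) mod n" unfolding q1 q2 by (rule mod_add_left_eq[symmetric])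
  qed
  have e2: "vtx n u (k + i) = vtx n u ((k + i) mod n)" by (simp add: vtx_mod)
  have e3: "vtx n u (k + 1 + i) = vtx n u ((k + i) mod n + 1)"
  proof (rule vtx_eq)
    have q: "k + 1 + i = (k + i) + 1" by simp
    show "(k + 1 + i) mod n = ((k + i) mod n + 1) mod n" unfolding q by (rule mod_add_left_eq[symmetric])
  qed
  have e4: "vtx n u (k + 2 + i) = vtx n u ((k + i) mod n + 2)"
  proof (rule vtx_eq)
    have q: "k + 2 + i = (k + i) + 2" by simp
    show "(k + 2 + i) mod n = ((k + i) mod n + 2) mod n" unfolding q by (rule mod_add_left_eq[symmetric])
  qed
  show ?thesis unfolding is_inflection_def vtx_rot e1 e2 e3 e4 ..
qed

lemma ninfl_rot:
  assumes n: "0 < n" and i: "i < n"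
  shows "num_inflections n (\<lambda>k. u ((k + i) mod n)) = num_inflections n u"
proof -
  have "(\<Sum>k<n. (of_bool (is_inflection n u ((k + i) mod n))::nat)) = (\<Sum>k<n. of_bool (is_inflection n u k))"
  proof (rule sum.reindex_bij_witness[where i="\<lambda>m. (m + n - i) mod n" and j="\<lambda>k. (k + i) mod n"])
    fix a assume "a \<in> {..<n}"
    then show "((a + i) mod n + n - i) mod n = a" "(a + i) mod n \<in> {..<n}" using rot_inv1 i n by auto
  next
    fix b assume "b \<in> {..<n}"
    then show "((b + n - i) mod n + i) mod n = b" "(b + n - i) mod n \<in> {..<n}" using rot_inv2 i n by auto
  qed simp
  then show ?thesis unfolding num_inflections_def card_sum infl_rot[OF n] .
qed


lemma two_opt_rot:
  assumes i: "i < n" and j: "j < n"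
  shows "two_opt n u i j k = two_opt n (\<lambda>k. u ((k + i) mod n)) 0 ((j + n - i) mod n) k"
proof -
  define j' where "j' = (j + n - i) mod n"
  have n: "0 < n" using i by simp
  have j'v: "j' = (if i \<le> j then j - i else j + n - i)"
  proof (cases "i \<le> j")
    case True
    have e: "j + n - i = (j - i) + n" using True by simp
    have "(j + n - i) mod n = ((j - i) + n) mod n" by (simp only: e)
    also have "\<dots> = j - i" using j by simp
    finally show ?thesis unfolding j'_def using True by simp
  next
    case False
    then have "j + n - i < n" using i by simp
    then show ?thesis unfolding j'_def using False by simp
  qed
  have j'l: "j' < n" unfolding j'_def using n by simp
  have mv: "(j' + n - 0) mod n = j'" using j'l by simp
  show ?thesis unfolding j'_def[symmetric] two_opt_def Let_def mv j'_def[symmetric]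
  proof -
    consider "k = 0" | "k \<noteq> 0 \<and> k \<le> j'" | "\<not> k \<le> j'" by blast
    then show "(if k = 0 then u i else if k \<le> j' then u ((j + n + 1 - k) mod n) else u ((j + k - j') mod n)) =
      (if k = 0 then u ((0 + i) mod n) else if k \<le> j' then u (((j' + n + 1 - k) mod n + i) mod n) else u (((j' + k - j') mod n + i) mod n))"
    proof cases
      case 1 then show ?thesis using i by simp
    next
      case 2
      have "(j + n + 1 - k) mod n = ((j' + n + 1 - k) mod n + i) mod n"
      proof (cases "i \<le> j")
        case True
        then have "j' = j - i" using j'v by simp
        then have "j' + n + 1 - k + i = j + n + 1 - k" using 2 True by arith
        then show ?thesis by (simp add: mod_add_left_eq)
      next
        case False
        then have "j' = j + n - i" using j'v by simp
        then have "j' + n + 1 - k + i = (j + n + 1 - k) + n" using 2 False i by arith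
        then have "((j' + n + 1 - k) mod n + i) mod n = ((j + n + 1 - k) + n) mod n" by (simp add: mod_add_left_eq)
        then show ?thesis by simp
      qed
      then show ?thesis using 2 by simp
    next
      case 3
      have "(j + k - j') mod n = ((j' + k - j') mod n + i) mod n"
      proof (cases "i \<le> j")
        case True
        then have "j' = j - i" using j'v by simp
        then have "j + k - j' = k + i" using 3 True by arith
        then show ?thesis by (simp add: mod_add_left_eq)
      next
        case False
        then have "j' = j + n - i" using j'v by simp
        then have e: "k + i = (j + k - j') + n" using 3 False i by arith
        have "((j' + k - j') mod n + i) mod n = (k + i) mod n" by (simp add: mod_add_left_eq)
        also have "\<dots> = (j + k - j') mod n" unfolding e by simp
        finally show ?thesis by simp
      qed
      then show ?thesis using 3 by simp
    qed
  qed
qed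


lemma adj_sym: "adjacent_edges n k l = adjacent_edges n l k"
  unfolding adjacent_edges_def by auto

theorem lemma15:
  fixes n i j :: nat and u :: "nat \<Rightarrow> real^3" and w :: "real^3"
  assumes "sph_polygon n u"
    and "i < n" and "j < n" and "\<not> adjacent_edges n i j"
    and "num_self_intersections n u = 1"
    and "edge n u i \<inter> edge n u j = {w}"
    and "\<forall>k<n. k \<noteq> i \<and> k \<noteq> j \<longrightarrow> u k \<notin> sph_triangle (u i) (u j) w"
    and "\<forall>k<n. k \<noteq> Suc i mod n \<and> k \<noteq> Suc j mod n \<longrightarrow>
           u k \<notin> sph_triangle (u (Suc i mod n)) (u (Suc j mod n)) w"
  shows "2 * num_self_intersections n u + num_inflections n u
           \<ge> 2 * num_self_intersections n (two_opt n u i j) + num_inflections n (two_opt n u i j)"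
proof -
  have n3: "3 \<le> n" using assms(1) unfolding sph_polygon_def by blast
  have i: "i < n" and j: "j < n" using assms(2,3) .
  define v where "v = (\<lambda>k. u ((k + i) mod n))"
  define j' where "j' = (j + n - i) mod n"
  have rotf: "\<And>k. k < n \<Longrightarrow> (k + i) mod n = (if k + i < n then k + i else k + i - n)"
    using rot_mod i by blast
  have j'v: "j' = (if i \<le> j then j - i else j + n - i)"
  proof (cases "i \<le> j")
    case True
    have e: "j + n - i = (j - i) + n" using True by simp
    have "(j + n - i) mod n = ((j - i) + n) mod n" by (simp only: e)
    also have "\<dots> = j - i" using j by simp
    finally show ?thesis unfolding j'_def using True by simp
  next
    case False
    then have "j + n - i < n" using i by simp
    then show ?thesis unfolding j'_def using False by simp
  qed
  have sucn: "\<And>k. k < n \<Longrightarrow> Suc k mod n = (if Suc k = n then 0 else Suc k)"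
    using Suc_mod_nx unfolding nx_def by blast
  have na: "i \<noteq> j" "Suc i mod n \<noteq> j" "Suc j mod n \<noteq> i" using assms(4) unfolding adjacent_edges_def by auto
  have jb: "2 \<le> j'" "j' + 2 \<le> n" using na j'v i j sucn[OF i] sucn[OF j] by (auto split: if_splits)
  have j'l: "j' < n" using jb by simp
  have j'i: "(j' + i) mod n = j"
  proof (cases "i \<le> j")
    case True then show ?thesis using j'v j by simp
  next
    case False
    then have "j' + i = j + n" using j'v i by simp
    then show ?thesis using j by simp
  qed
  have Sj'i: "(Suc j' + i) mod n = Suc j mod n"
  proof -
    have "(Suc j' + i) mod n = Suc (j' + i) mod n" by simp
    also have "\<dots> = Suc ((j' + i) mod n) mod n" by (simp add: mod_Suc_eq)
    finally show ?thesis using j'i by simp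
  qed
  have vi: "v 0 = u i" unfolding v_def using i by simp
  have vj: "v j' = u j" unfolding v_def using j'i by simp
  have v1: "v 1 = u (Suc i mod n)" unfolding v_def by simp
  have vSj: "v (Suc j') = u (Suc j mod n)" unfolding v_def using Sj'i by simp
  have mem: "(min i j, max i j) \<in> self_intersections n u"
  proof -
    have "edge n u (min i j) \<inter> edge n u (max i j) \<noteq> {}" using assms(6)
      by (cases "i \<le> j") (auto simp: min_def max_def Int_commute)
    moreover have "\<not> adjacent_edges n (min i j) (max i j)" using assms(4) adj_sym
      by (cases "i \<le> j") (auto simp: min_def max_def)
    ultimately show ?thesis unfolding self_intersections_def using na i j by (auto simp: min_def max_def)
  qed
  have SI: "self_intersections n u = {(min i j, max i j)}"
  proof -
    obtain x where "self_intersections n u = {x}" using assms(5) unfolding num_self_intersections_def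
      by (rule card_1_singletonE)
    then show ?thesis using mem by auto
  qed
  have adj_rot: "adjacent_edges n k l"
    if kl0: "k < n" "l < n" "adjacent_edges n ((k + i) mod n) ((l + i) mod n)" for k l
  proof -
    have sm: "Suc ((x + i) mod n) mod n = ((Suc x mod n) + i) mod n" for x
    proof -
      have "Suc ((x + i) mod n) mod n = Suc (x + i) mod n" by (simp add: mod_Suc_eq)
      moreover have "((Suc x mod n) + i) mod n = (Suc x + i) mod n" by (simp add: mod_add_left_eq)
      ultimately show ?thesis by simp
    qed
    have sl: "Suc x mod n < n" for x using i by simp
    consider "(k + i) mod n = (l + i) mod n" | "Suc ((k + i) mod n) mod n = (l + i) mod n" | "Suc ((l + i) mod n) mod n = (k + i) mod n"
      using kl0(3) unfolding adjacent_edges_def by blast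
    then show ?thesis
    proof cases
      case 1 then have "k = l" using rot_inj kl0(1,2) i by blast
      then show ?thesis unfolding adjacent_edges_def by simp
    next
      case 2 then have "Suc k mod n = l" using rot_inj[OF sl kl0(2) i] sm by metis
      then show ?thesis unfolding adjacent_edges_def by simp
    next
      case 3 then have "Suc l mod n = k" using rot_inj[OF sl kl0(1) i] sm by metis
      then show ?thesis unfolding adjacent_edges_def by simp
    qed
  qed
  have only_v: "(k = 0 \<and> l = j') \<or> (k = j' \<and> l = 0)"
    if kl: "k < n" "l < n" "\<not> adjacent_edges n k l" "edge n v k \<inter> edge n v l \<noteq> {}" for k l
  proof -
    let ?k = "(k + i) mod n" and ?l = "(l + i) mod n"
    have lt: "?k < n" "?l < n" using i by auto
    have e: "edge n v k = edge n u ?k" "edge n v l = edge n u ?l" unfolding v_def by (rule edge_rot)+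
    have nad: "\<not> adjacent_edges n ?k ?l" using adj_rot kl by blast
    then have ne: "?k \<noteq> ?l" unfolding adjacent_edges_def by auto
    have "(min ?k ?l, max ?k ?l) \<in> self_intersections n u"
    proof -
      have "edge n u (min ?k ?l) \<inter> edge n u (max ?k ?l) \<noteq> {}" using kl(4) e
        by (cases "?k \<le> ?l") (auto simp: min_def max_def Int_commute)
      moreover have "\<not> adjacent_edges n (min ?k ?l) (max ?k ?l)" using nad adj_sym
        by (cases "?k \<le> ?l") (auto simp: min_def max_def)
      ultimately show ?thesis unfolding self_intersections_def using ne lt by (auto simp: min_def max_def)
    qed
    then have "(min ?k ?l, max ?k ?l) = (min i j, max i j)" using SI by simp
    then have "(?k = i \<and> ?l = j) \<or> (?k = j \<and> ?l = i)" using ne na(1) by (auto simp: min_def max_def split: if_splits)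
    moreover have "?k = i \<Longrightarrow> k = 0" using rot_inj[of k n 0 i] kl(1) i n3 by simp
    moreover have "?l = i \<Longrightarrow> l = 0" using rot_inj[of l n 0 i] kl(2) i n3 by simp
    moreover have "?k = j \<Longrightarrow> k = j'" using rot_inj[of k n j' i] kl(1) i j'l j'i by simp
    moreover have "?l = j \<Longrightarrow> l = j'" using rot_inj[of l n j' i] kl(2) i j'l j'i by simp
    ultimately show ?thesis by blast
  qed
  have poly_v: "sph_polygon n v"
    unfolding sph_polygon_def
  proof (intro conjI allI impI)
    show "3 \<le> n" by (rule n3)
  next
    fix k assume "k < n"
    then show "norm (v k) = 1" unfolding v_def using assms(1) i unfolding sph_polygon_def by auto
  next
    fix a b c assume h: "a < n" "b < n" "c < n" "a \<noteq> b \<and> b \<noteq> c \<and> a \<noteq> c"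
    have "(a + i) mod n \<noteq> (b + i) mod n" "(b + i) mod n \<noteq> (c + i) mod n" "(a + i) mod n \<noteq> (c + i) mod n"
      using rot_inj h i by blast+
    moreover have "(a + i) mod n < n" "(b + i) mod n < n" "(c + i) mod n < n" using i by auto
    ultimately show "det3 (v a) (v b) (v c) \<noteq> 0" unfolding v_def using assms(1) unfolding sph_polygon_def by blast
  qed
  have cross_v: "edge n v 0 \<inter> edge n v j' = {w}"
  proof -
    have "edge n v 0 = edge n u i" unfolding v_def using edge_rot[of n u i 0] i by simp
    moreover have "edge n v j' = edge n u j" unfolding v_def using edge_rot[of n u i j'] j'i by simp
    ultimately show ?thesis using assms(6) by simp
  qed
  have T1_v: "v k \<notin> sph_triangle (v 0) (v j') w" if "k < n" "k \<noteq> 0" "k \<noteq> j'" for k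
  proof -
    have "(k + i) mod n \<noteq> i" using rot_inj[of k n 0 i] that i n3 by auto
    moreover have "(k + i) mod n \<noteq> j" using rot_inj[of k n j' i] that i j'l j'i by auto
    moreover have "(k + i) mod n < n" using i by simp
    ultimately show ?thesis unfolding vi vj using assms(7) unfolding v_def by blast
  qed
  have T2_v: "v k \<notin> sph_triangle (v 1) (v (Suc j')) w" if "k < n" "k \<noteq> 1" "k \<noteq> Suc j'" for k
  proof -
    have "(k + i) mod n \<noteq> Suc i mod n" using rot_inj[of k n 1 i] that i n3 by auto
    moreover have "(k + i) mod n \<noteq> Suc j mod n" using rot_inj[of k n "Suc j'" i] that i jb Sj'i by auto
    moreover have "(k + i) mod n < n" using i by simp
    ultimately show ?thesis unfolding v1 vSj using assms(8) unfolding v_def by blast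
  qed
  interpret L n j' v w
    by (unfold_locales) (use poly_v jb only_v cross_v T1_v T2_v in auto)
  obtain p q r t where pqrt: "p > 0" "q > 0" "r > 0" "t > 0" "w = p *\<^sub>R v 0 + q *\<^sub>R v 1" "w = r *\<^sub>R v j' + t *\<^sub>R v (Suc j')"
    using wdec by blast
  interpret L2 n j' v w p q r t
    by (unfold_locales) (use pqrt in auto)
  have sP: "num_self_intersections n (two_opt n v 0 j') = 0" using selfP unfolding P_def .
  have iP: "num_inflections n (two_opt n v 0 j') \<le> num_inflections n v + 2" using infl_bound unfolding P_def .
  have iv: "num_inflections n v = num_inflections n u" unfolding v_def using ninfl_rot[of n i u] i by simp
  have to: "two_opt n u i j = two_opt n v 0 j'" unfolding v_def j'_def using two_opt_rot[OF i j] by (rule ext)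
  show ?thesis using sP iP iv to assms(5) by simp
qed


end
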